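(* Let $\vartheta$ be a primitive semi-compatible random substitution with topological entropy $s$. If $\vartheta$ satisfies the identical set condition, then $s=\frac{1}{\lambda}\bm q_1^\intercal\bm R$. If $\vartheta$ satisfies the disjoint set condition, then $s=\frac{1}{\lambda-1}\bm q_1^\intercal\bm R$.
   Context: Let $\mathcal A=\{a_1,\dots,a_n\}$ be a finite alphabet, $\mathcal A^+$ the finite non-empty words over $\mathcal A$. A random substitution is a map $\vartheta$ from $\mathcal A$ to finite non-empty subsets of $\mathcal A^+$, extended to words by $\vartheta(u_1\cdots u_m)=\{w_1\cdots w_m: w_k\in\vartheta(u_k)\}$ and to sets of words by unions; powers $\vartheta^m$ are compositions. $|u|_a$ is the number of occurrences of letter $a$ in $u$; $\Phi(u)=(|u|_{a_1},\dots,|u|_{a_n})^\intercal$. $\vartheta$ is semi-compatible if for each $a$ all words in $\vartheta(a)$ have the same $\Phi$. Substitution matrix $M_{ij}=|u|_{a_i}$, $u\in\vartheta(a_j)$; primitive means $M$ primitive, with Perron–Frobenius eigenvalue $\lambda$ and right PF eigenvector $\bm R$, $\|\bm R\|_1=1$. $\bm q_1=(\log\#\vartheta(a_1),\dots,\log\#\vartheta(a_n))^\intercal$. The language $\mathcal L$ is the set of all subwords of words in $\vartheta^m(a)$, $a\in\mathcal A$, $m\in\mathbb N$; $\mathcal L_\ell$ its words of length $\ell$; topological entropy $s=\lim_{\ell\to\infty}\frac1\ell\log\#\mathcal L_\ell$. Identical set condition: for all $i$, $m\in\mathbb N$, $u,v\in\vartheta(a_i)$: $\vartheta^m(u)=\vartheta^m(v)$.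 Disjoint set condition: for all $i$, $m\in\mathbb N$, $u\neq v\in\vartheta(a_i)$: $\vartheta^m(u)\cap\vartheta^m(v)=\varnothing$. *)

theory Defs
  imports Complex_Main "HOL-Library.Sublist"
begin

definition is_random_subst :: "('a \<Rightarrow> 'a list set) \<Rightarrow> bool" where
  "is_random_subst \<theta> \<longleftrightarrow> (\<forall>a. finite (\<theta> a) \<and> \<theta> a \<noteq> {} \<and> [] \<notin> \<theta> a)"

fun subst_word :: "('a \<Rightarrow> 'a list set) \<Rightarrow> 'a list \<Rightarrow> 'a list set" where
  "subst_word \<theta> [] = {[]}"
| "subst_word \<theta> (a # u) = {w @ v | w v. w \<in> \<theta> a \<and> v \<in> subst_word \<theta> u}"

definition subst_set :: "('a \<Rightarrow> 'a list set) \<Rightarrow> 'a list set \<Rightarrow> 'a list set" where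
  "subst_set \<theta> S = (\<Union>u\<in>S. subst_word \<theta> u)"

fun subst_pow :: "('a \<Rightarrow> 'a list set) \<Rightarrow> nat \<Rightarrow> 'a list \<Rightarrow> 'a list set" where
  "subst_pow \<theta> 0 u = {u}"
| "subst_pow \<theta> (Suc m) u = subst_set \<theta> (subst_pow \<theta> m u)"

definition Phi :: "'a list \<Rightarrow> 'a \<Rightarrow> nat" where
  "Phi u = (\<lambda>b. count_list u b)"

definition semi_compatible :: "('a \<Rightarrow> 'a list set) \<Rightarrow> bool" where
  "semi_compatible \<theta> \<longleftrightarrow> (\<forall>a. \<forall>u\<in>\<theta> a. \<forall>v\<in>\<theta> a. Phi u = Phi v)"

definition subst_matrix :: "('a \<Rightarrow> 'a list set) \<Rightarrow> 'a \<Rightarrow> 'a \<Rightarrow> real" where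
  "subst_matrix \<theta> i j = real (count_list (SOME u. u \<in> \<theta> j) i)"

definition mat_mult :: "('a::finite \<Rightarrow> 'a \<Rightarrow> real) \<Rightarrow> ('a \<Rightarrow> 'a \<Rightarrow> real) \<Rightarrow> 'a \<Rightarrow> 'a \<Rightarrow> real" where
  "mat_mult A B i j = (\<Sum>k\<in>UNIV. A i k * B k j)"

fun mat_pow :: "('a::finite \<Rightarrow> 'a \<Rightarrow> real) \<Rightarrow> nat \<Rightarrow> 'a \<Rightarrow> 'a \<Rightarrow> real" where
  "mat_pow A 0 = (\<lambda>i j. if i = j then 1 else 0)"
| "mat_pow A (Suc k) = mat_mult (mat_pow A k) A"

definition primitive_matrix :: "('a::finite \<Rightarrow> 'a \<Rightarrow> real) \<Rightarrow> bool" where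
  "primitive_matrix A \<longleftrightarrow> (\<forall>i j. A i j \<ge> 0) \<and> (\<exists>k>0. \<forall>i j. mat_pow A k i j > 0)"

definition is_eigenvalue :: "('a::finite \<Rightarrow> 'a \<Rightarrow> real) \<Rightarrow> complex \<Rightarrow> bool" where
  "is_eigenvalue A \<mu> \<longleftrightarrow>
     (\<exists>v::'a \<Rightarrow> complex. v \<noteq> (\<lambda>_. 0) \<and> (\<forall>i. (\<Sum>j\<in>UNIV. complex_of_real (A i j) * v j) = \<mu> * v i))"

definition is_PF_eigenvalue :: "('a::finite \<Rightarrow> 'a \<Rightarrow> real) \<Rightarrow> real \<Rightarrow> bool" where
  "is_PF_eigenvalue A l \<longleftrightarrow> is_eigenvalue A (complex_of_real l) \<and> (\<forall>\<mu>. is_eigenvalue A \<mu> \<longrightarrow> cmod \<mu> \<le> l)"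

definition is_PF_right_eigenvector :: "('a::finite \<Rightarrow> 'a \<Rightarrow> real) \<Rightarrow> real \<Rightarrow> ('a \<Rightarrow> real) \<Rightarrow> bool" where
  "is_PF_right_eigenvector A l R \<longleftrightarrow>
     (\<forall>i. R i > 0) \<and> (\<Sum>i\<in>UNIV. \<bar>R i\<bar>) = 1 \<and> (\<forall>i. (\<Sum>j\<in>UNIV. A i j * R j) = l * R i)"

definition q1 :: "('a \<Rightarrow> 'a list set) \<Rightarrow> 'a \<Rightarrow> real" where
  "q1 \<theta> a = ln (real (card (\<theta> a)))"

definition language :: "('a \<Rightarrow> 'a list set) \<Rightarrow> 'a list set" where
  "language \<theta> = {w. \<exists>a m. \<exists>u\<in>subst_pow \<theta> m [a]. sublist w u}"

definition language_len :: "('a \<Rightarrow> 'a list set) \<Rightarrow> nat \<Rightarrow> 'a list set" where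
  "language_len \<theta> l = {w \<in> language \<theta>. length w = l}"

definition identical_set_condition :: "('a \<Rightarrow> 'a list set) \<Rightarrow> bool" where
  "identical_set_condition \<theta> \<longleftrightarrow>
     (\<forall>a m. m \<ge> 1 \<longrightarrow> (\<forall>u\<in>\<theta> a. \<forall>v\<in>\<theta> a. subst_pow \<theta> m u = subst_pow \<theta> m v))"

definition disjoint_set_condition :: "('a \<Rightarrow> 'a list set) \<Rightarrow> bool" where
  "disjoint_set_condition \<theta> \<longleftrightarrow>
     (\<forall>a m. m \<ge> 1 \<longrightarrow> (\<forall>u\<in>\<theta> a. \<forall>v\<in>\<theta> a. u \<noteq> v \<longrightarrow> subst_pow \<theta> m u \<inter> subst_pow \<theta> m v = {}))"

end

theory Submission
  imports Defs
begin


definition conc :: "'a list set \<Rightarrow> 'a list set \<Rightarrow> 'a list set" where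
  "conc A B = {x @ y | x y. x \<in> A \<and> y \<in> B}"

lemma conc_assoc: "conc (conc A B) C = conc A (conc B C)"
  unfolding conc_def by auto (metis append_assoc)+

lemma conc_Nil[simp]: "conc {[]} A = A" "conc A {[]} = A"
  unfolding conc_def by auto

lemma subst_word_Cons: "subst_word \<theta> (a#u) = conc (\<theta> a) (subst_word \<theta> u)"
  by (simp add: conc_def)

lemma subst_word_append: "subst_word \<theta> (u@v) = conc (subst_word \<theta> u) (subst_word \<theta> v)"
  by (induction u) (simp_all add: conc_assoc subst_word_Cons del: subst_word.simps(2))

lemma subst_word_single[simp]: "subst_word \<theta> [a] = \<theta> a"
  by (simp add: subst_word_Cons del: subst_word.simps(2))

lemma subst_set_conc: "subst_set \<theta> (conc A B) = conc (subst_set \<theta> A) (subst_set \<theta> B)"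
proof
  show "subst_set \<theta> (conc A B) \<subseteq> conc (subst_set \<theta> A) (subst_set \<theta> B)"
    unfolding subst_set_def conc_def by (auto simp: subst_word_append conc_def) blast
  show "conc (subst_set \<theta> A) (subst_set \<theta> B) \<subseteq> subst_set \<theta> (conc A B)"
  proof
    fix z assume "z \<in> conc (subst_set \<theta> A) (subst_set \<theta> B)"
    then obtain x y a b where "z = x @ y" "a \<in> A" "b \<in> B" "x \<in> subst_word \<theta> a" "y \<in> subst_word \<theta> b"
      unfolding conc_def subst_set_def by auto
    then have "z \<in> subst_word \<theta> (a @ b)" "a @ b \<in> conc A B"
      by (auto simp: subst_word_append conc_def)
    then show "z \<in> subst_set \<theta> (conc A B)" unfolding subst_set_def by auto
  qed
qed

lemma subst_set_single[simp]: "subst_set \<theta> {u} = subst_word \<theta> u"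
  by (simp add: subst_set_def)

lemma subst_pow_append: "subst_pow \<theta> m (u@v) = conc (subst_pow \<theta> m u) (subst_pow \<theta> m v)"
  proof (induction m)
  case 0 then show ?case by (simp add: conc_def)
qed (simp add: subst_set_conc)

lemma subst_pow_add: "subst_pow \<theta> (m+k) u = (\<Union>v\<in>subst_pow \<theta> k u. subst_pow \<theta> m v)"
  by (induction m) (auto simp: subst_set_def)

lemma subst_pow_1: "subst_pow \<theta> 1 u = subst_word \<theta> u"
  by (simp add: subst_set_def)

lemma subst_pow_Suc': "subst_pow \<theta> (Suc m) u = (\<Union>v\<in>subst_word \<theta> u. subst_pow \<theta> m v)"
  using subst_pow_add[of \<theta> m 1 u] by (simp add: subst_pow_1)

lemma conc_finite: "finite A \<Longrightarrow> finite B \<Longrightarrow> finite (conc A B)"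
proof -
  assume "finite A" "finite B"
  have "conc A B = (\<lambda>(x,y). x@y) ` (A \<times> B)" unfolding conc_def by auto
  thus ?thesis using \<open>finite A\<close> \<open>finite B\<close> by simp
qed

lemma conc_nonempty: "A \<noteq> {} \<Longrightarrow> B \<noteq> {} \<Longrightarrow> conc A B \<noteq> {}"
  unfolding conc_def by auto

lemma subst_word_fin:
  assumes "is_random_subst \<theta>" shows "finite (subst_word \<theta> u) \<and> subst_word \<theta> u \<noteq> {}"
  using assms by (induction u) (auto simp: is_random_subst_def subst_word_Cons conc_finite conc_nonempty
      simp del: subst_word.simps(2))

lemma subst_pow_fin:
  assumes "is_random_subst \<theta>" shows "finite (subst_pow \<theta> m u) \<and> subst_pow \<theta> m u \<noteq> {}"
proof (induction m arbitrary: u)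
  case 0 then show ?case by simp
next
  case (Suc m)
  show ?case unfolding subst_pow_Suc' using Suc subst_word_fin[OF assms, of u] by auto
qed



lemma mat_mult_assoc: "mat_mult (mat_mult A B) C = mat_mult A (mat_mult B C)"
  unfolding mat_mult_def
  by (auto simp: fun_eq_iff sum_distrib_left sum_distrib_right mult.assoc intro: sum.swap)

lemma mat_mult_id: "mat_mult (\<lambda>i j. if i = j then 1 else 0) B = B" "mat_mult B (\<lambda>i j. if i = j then 1 else 0) = B"
proof -
  have "\<And>i j. (\<Sum>k\<in>UNIV. (if i = k then 1 else 0) * B k j) = B i j"
    by (simp add: if_distrib[of "\<lambda>c. c * _"] cong: if_cong)
  moreover have "\<And>i j. (\<Sum>k\<in>UNIV. B i k * (if k = j then 1 else 0)) = B i j"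
    by (simp add: if_distrib cong: if_cong)
  ultimately show "mat_mult (\<lambda>i j. if i = j then 1 else 0) B = B" "mat_mult B (\<lambda>i j. if i = j then 1 else 0) = B"
    unfolding mat_mult_def by (auto simp: fun_eq_iff)
qed

lemma mat_pow_add: "mat_pow A (m + k) = mat_mult (mat_pow A m) (mat_pow A k)"
  by (induction k) (simp_all add: mat_mult_id mat_mult_assoc)

lemma mat_pow_Suc': "mat_pow A (Suc k) = mat_mult A (mat_pow A k)"
  using mat_pow_add[of A 1 k] by (simp add: mat_mult_id)

lemma mat_pow_nonneg: "(\<And>i j. A i j \<ge> 0) \<Longrightarrow> mat_pow A k i j \<ge> 0"
  by (induction k arbitrary: i j) (auto simp: mat_mult_def intro!: sum_nonneg)

lemma count_sw:
  fixes \<theta> :: "'a::finite \<Rightarrow> 'a list set"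
  assumes rs: "is_random_subst \<theta>" and sc: "semi_compatible \<theta>"
  shows "x \<in> subst_word \<theta> u \<Longrightarrow>
    real (count_list x i) = (\<Sum>j\<in>UNIV. subst_matrix \<theta> i j * real (count_list u j))"
proof (induction u arbitrary: x)
  case Nil then show ?case by simp
next
  case (Cons a u)
  then obtain w v where x: "x = w @ v" "w \<in> \<theta> a" "v \<in> subst_word \<theta> u" by auto
  have ne: "\<exists>y. y \<in> \<theta> a" using rs unfolding is_random_subst_def by auto
  have "(SOME y. y \<in> \<theta> a) \<in> \<theta> a" using someI_ex[OF ne] .
  with x(2) sc have "Phi w = Phi (SOME y. y \<in> \<theta> a)" unfolding semi_compatible_def by blast
  then have cw: "real (count_list w i) = subst_matrix \<theta> i a"
    unfolding subst_matrix_def Phi_def by (metis)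
  have "(\<Sum>j\<in>UNIV. subst_matrix \<theta> i j * real (count_list (a#u) j))
      = (\<Sum>j\<in>UNIV. subst_matrix \<theta> i j * (if a = j then 1 else 0))
        + (\<Sum>j\<in>UNIV. subst_matrix \<theta> i j * real (count_list u j))"
    unfolding sum.distrib[symmetric] by (intro sum.cong) (auto simp: algebra_simps)
  also have "(\<Sum>j\<in>UNIV. subst_matrix \<theta> i j * (if a = j then 1 else 0)) = subst_matrix \<theta> i a"
  proof -
    have "(\<Sum>j\<in>UNIV. subst_matrix \<theta> i j * (if a = j then 1 else 0)) = (\<Sum>j\<in>UNIV. if j = a then subst_matrix \<theta> i a else 0)"
      by (intro sum.cong) auto
    then show ?thesis by simp
  qed
  finally show ?case using Cons.IH[OF x(3)] cw x(1) by simp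
qed

lemma count_pow:
  assumes rs: "is_random_subst \<theta>" and sc: "semi_compatible \<theta>"
  shows "x \<in> subst_pow \<theta> m u \<Longrightarrow>
    real (count_list x i) = (\<Sum>j\<in>UNIV. mat_pow (subst_matrix \<theta>) m i j * real (count_list u j))"
proof (induction m arbitrary: x u i)
  case 0
  have "(\<Sum>j\<in>UNIV. (if i = j then 1 else 0) * real (count_list u j)) = real (count_list u i)"
    by (simp add: if_distrib[of "\<lambda>c. c * _"] cong: if_cong)
  then show ?case using 0 by simp
next
  case (Suc m)
  let ?M = "subst_matrix \<theta>"
  from Suc.prems obtain v where v: "v \<in> subst_word \<theta> u" "x \<in> subst_pow \<theta> m v"
    unfolding subst_pow_Suc' by auto
  have "real (count_list x i) = (\<Sum>j\<in>UNIV. mat_pow ?M m i j * real (count_list v j))"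
    using Suc.IH[OF v(2)] .
  also have "\<dots> = (\<Sum>j\<in>UNIV. mat_pow ?M m i j * (\<Sum>k\<in>UNIV. ?M j k * real (count_list u k)))"
    using count_sw[OF rs sc v(1)] by simp
  also have "\<dots> = (\<Sum>k\<in>UNIV. mat_pow ?M (Suc m) i k * real (count_list u k))"
    unfolding sum_distrib_left mult.assoc[symmetric]
    by (subst sum.swap) (simp add: mat_mult_def sum_distrib_right)
  finally show ?case .
qed

lemma length_count: "length (x::'a::finite list) = (\<Sum>i\<in>UNIV. count_list x i)"
  using sum_count_set[of x UNIV] by simp



definition mvec :: "('a::finite \<Rightarrow> 'a \<Rightarrow> real) \<Rightarrow> ('a \<Rightarrow> real) \<Rightarrow> 'a \<Rightarrow> real" where
  "mvec A x i = (\<Sum>j\<in>UNIV. A i j * x j)"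

lemma mvec_mult: "mvec (mat_mult A B) x = mvec A (mvec B x)"
  unfolding mvec_def mat_mult_def
  by (auto simp: fun_eq_iff sum_distrib_left sum_distrib_right mult.assoc intro: sum.swap)

lemma mvec_mono: "(\<And>i j. A i j \<ge> 0) \<Longrightarrow> (\<And>j. x j \<le> y j) \<Longrightarrow> mvec A x i \<le> mvec A y i"
  unfolding mvec_def by (intro sum_mono mult_left_mono) auto

lemma mvec_nonneg: "(\<And>i j. A i j \<ge> 0) \<Longrightarrow> (\<And>j. x j \<ge> 0) \<Longrightarrow> mvec A x i \<ge> 0"
  unfolding mvec_def by (intro sum_nonneg) auto

lemma mvec_scale: "mvec A (\<lambda>j. c * x j) i = c * mvec A x i"
  unfolding mvec_def by (simp add: sum_distrib_left algebra_simps)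

lemma mvec_diff: "mvec A (\<lambda>j. x j - y j) i = mvec A x i - mvec A y i"
  unfolding mvec_def by (simp add: sum_subtractf algebra_simps)

lemma mvec_pow_R:
  assumes "\<And>i. mvec M R i = lam * R i"
  shows "mvec (mat_pow M k) R i = lam^k * R i"
proof (induction k arbitrary: i)
  case 0
  have "(\<Sum>j\<in>UNIV. (if i = j then 1 else 0) * R j) = R i"
    by (simp add: if_distrib[of "\<lambda>c. c * _"] cong: if_cong)
  then show ?case by (simp add: mvec_def)
next
  case (Suc k)
  have "mvec (mat_pow M (Suc k)) R i = mvec M (\<lambda>j. lam^k * R j) i"
  proof -
    have "mvec (mat_pow M k) R = (\<lambda>j. lam^k * R j)" using Suc.IH by auto
    then show ?thesis by (simp only: mat_pow_Suc' mvec_mult)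
  qed
  also have "\<dots> = lam^k * (lam * R i)" by (simp add: mvec_scale assms)
  finally show ?case by simp
qed

lemma mvec_ge_term:
  assumes "\<And>i j. A i j \<ge> 0" "\<And>j. x j \<ge> 0"
  shows "A i j * x j \<le> mvec A x i"
  unfolding mvec_def by (rule member_le_sum) (auto intro: assms mult_nonneg_nonneg)

lemma pf_conv:
  fixes M :: "'a::finite \<Rightarrow> 'a \<Rightarrow> real"
  assumes nn: "\<And>i j. M i j \<ge> 0" and pos: "\<And>i j. mat_pow M p i j > 0"
    and Rpos: "\<And>i. R i > 0" and eig: "\<And>i. mvec M R i = lam * R i" and lam: "lam > 0"
    and xnn: "\<And>j. x j \<ge> 0" and xpos: "x j0 > 0"
  shows "\<exists>c>0. \<forall>d. (\<lambda>k. mvec (mat_pow M k) x d / lam^k) \<longlonglongrightarrow> c * R d"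
proof -
  define V where "V k = mvec (mat_pow M k) x" for k
  define r where "r k d = V k d / (lam^k * R d)" for k d
  define mn where "mn k = Min (range (r k))" for k
  define mx where "mx k = Max (range (r k))" for k
  have Pnn: "\<And>q i j. mat_pow M q i j \<ge> 0" using mat_pow_nonneg nn by blast
  have Vnn: "\<And>k d. V k d \<ge> 0" unfolding V_def by (rule mvec_nonneg[OF Pnn xnn])
  have Vadd: "V (q + k) = mvec (mat_pow M q) (V k)" for q k
    unfolding V_def by (simp add: mat_pow_add mvec_mult fun_eq_iff)
  have lpos: "\<And>k d. lam^k * R d > 0" using lam Rpos by simp
  have rV: "V k d = r k d * (lam^k * R d)" for k d
    unfolding r_def using lam Rpos[of d] by (simp add: field_simps)
  have mn_le: "mn k \<le> r k d" and le_mx: "r k d \<le> mx k" for k d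
    unfolding mn_def mx_def by auto
  have "\<exists>d. r k d = mn k" for k
  proof -
    have "mn k \<in> range (r k)" unfolding mn_def by (rule Min_in) auto
    then show ?thesis by auto
  qed
  then obtain amn where amn: "\<And>k. r k (amn k) = mn k" by metis
  have "\<exists>d. r k d = mx k" for k
  proof -
    have "mx k \<in> range (r k)" unfolding mx_def by (rule Max_in) auto
    then show ?thesis by auto
  qed
  then obtain amx where amx: "\<And>k. r k (amx k) = mx k" by metis
  have step_lo: "mn k \<le> r (q + k) d" for q k d
  proof -
    have "\<And>j. mn k * lam^k * R j \<le> V k j"
      using mn_le rV lpos by (metis mult.assoc mult_le_cancel_right_pos)
    then have "mvec (mat_pow M q) (\<lambda>j. (mn k * lam^k) * R j) d \<le> V (q + k) d"
      unfolding Vadd by (intro mvec_mono[OF Pnn]) (simp add: mult.assoc)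
    then have "mn k * lam^k * (lam^q * R d) \<le> r (q+k) d * (lam^(q+k) * R d)"
      unfolding mvec_scale mvec_pow_R[OF eig] rV[of "q+k"] .
    then have "mn k * (lam^(q+k) * R d) \<le> r (q+k) d * (lam^(q+k) * R d)"
      by (simp add: power_add algebra_simps)
    then show ?thesis using lpos[of "q+k" d] by (metis mult_le_cancel_right_pos)
  qed
  have step_hi: "r (q + k) d \<le> mx k" for q k d
  proof -
    have "\<And>j. V k j \<le> mx k * lam^k * R j"
      using le_mx rV lpos by (metis mult.assoc mult_le_cancel_right_pos)
    then have "V (q + k) d \<le> mvec (mat_pow M q) (\<lambda>j. (mx k * lam^k) * R j) d"
      unfolding Vadd by (intro mvec_mono[OF Pnn]) (simp add: mult.assoc)
    then have "r (q+k) d * (lam^(q+k) * R d) \<le> mx k * lam^k * (lam^q * R d)"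
      unfolding mvec_scale mvec_pow_R[OF eig] rV[of "q+k"] .
    then have "r (q+k) d * (lam^(q+k) * R d) \<le> mx k * (lam^(q+k) * R d)"
      by (simp add: power_add algebra_simps)
    then show ?thesis using lpos[of "q+k" d] by (metis mult_le_cancel_right_pos)
  qed
  have inc: "incseq mn"
  proof (rule incseq_SucI)
    fix k show "mn k \<le> mn (Suc k)" using step_lo[of k 1 "amn (Suc k)"] amn[of "Suc k"] by simp
  qed
  have dec: "decseq mx"
  proof (rule decseq_SucI)
    fix k show "mx (Suc k) \<le> mx k" using step_hi[of 1 k "amx (Suc k)"] amx[of "Suc k"] by simp
  qed
  have mnmx: "mn k \<le> mx k" for k using mn_le le_mx order_trans by blast
  obtain c1 where c1: "mn \<longlonglongrightarrow> c1"
    using incseq_convergent[OF inc, of "mx 0"] mnmx dec by (metis decseqD order_trans zero_le)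
  obtain c2 where c2: "mx \<longlonglongrightarrow> c2"
    using decseq_convergent[OF dec, of "mn 0"] mnmx inc by (metis incseqD order_trans zero_le)
  have c12: "c1 \<le> c2" using c1 c2 mnmx by (intro LIMSEQ_le) auto
  define \<delta> where "\<delta> = Min (range (\<lambda>(d,j). mat_pow M p d j * R j / (lam^p * R d)))"
  have \<delta>pos: "\<delta> > 0"
  proof -
    have "\<delta> \<in> range (\<lambda>(d,j). mat_pow M p d j * R j / (lam^p * R d))"
      unfolding \<delta>_def by (intro Min_in) auto
    then show ?thesis using pos Rpos lpos by (auto intro!: divide_pos_pos)
  qed
  have \<delta>le: "\<delta> * (lam^p * R d) \<le> mat_pow M p d j * R j" for d j
  proof -
    have "\<delta> \<le> mat_pow M p d j * R j / (lam^p * R d)"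
      unfolding \<delta>_def by (rule Min_le) auto
    then show ?thesis using lpos[of p d] by (simp add: field_simps)
  qed
  have contr: "mn k + \<delta> * (mx k - mn k) \<le> mn (p + k)" for k
  proof -
    define z where "z j = V k j - mn k * lam^k * R j" for j
    have znn: "z j \<ge> 0" for j
      unfolding z_def using mn_le rV lpos by (metis diff_ge_0_iff_ge mult.assoc mult_le_cancel_right_pos)
    let ?d = "amn (p + k)"
    let ?j = "amx k"
    have "mat_pow M p ?d ?j * z ?j \<le> mvec (mat_pow M p) z ?d"
      by (rule mvec_ge_term[OF Pnn znn])
    also have "mvec (mat_pow M p) z ?d = V (p + k) ?d - mn k * lam^k * (lam^p * R ?d)"
      unfolding z_def Vadd mvec_diff mvec_scale[of _ "mn k * lam ^ k", symmetric]
      by (simp add: mult.assoc mvec_scale mvec_pow_R[OF eig])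
    finally have A: "mat_pow M p ?d ?j * z ?j \<le> V (p + k) ?d - mn k * lam^k * (lam^p * R ?d)" .
    have zj: "z ?j = (mx k - mn k) * lam^k * R ?j" unfolding z_def rV amx by (simp add: algebra_simps)
    have "\<delta> * (lam^p * R ?d) * ((mx k - mn k) * lam^k) \<le> mat_pow M p ?d ?j * R ?j * ((mx k - mn k) * lam^k)"
      by (intro mult_right_mono \<delta>le) (use mnmx lam in auto)
    also have "\<dots> = mat_pow M p ?d ?j * z ?j" unfolding zj by (simp add: algebra_simps)
    finally have "\<delta> * (lam^p * R ?d) * ((mx k - mn k) * lam^k) \<le> V (p + k) ?d - mn k * lam^k * (lam^p * R ?d)"
      using A by linarith
    then have "(mn k + \<delta> * (mx k - mn k)) * (lam^(p+k) * R ?d) \<le> r (p+k) ?d * (lam^(p+k) * R ?d)"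
      unfolding rV[of "p+k"] by (simp add: power_add algebra_simps)
    then show ?thesis using lpos[of "p+k" ?d] amn[of "p+k"] by (metis mult_le_cancel_right_pos)
  qed
  have "(\<lambda>k. mn (k + p)) \<longlonglongrightarrow> c1" using LIMSEQ_ignore_initial_segment[OF c1] .
  moreover have "(\<lambda>k. mn k + \<delta> * (mx k - mn k)) \<longlonglongrightarrow> c1 + \<delta> * (c2 - c1)"
    by (intro tendsto_intros c1 c2)
  ultimately have "c1 + \<delta> * (c2 - c1) \<le> c1"
    using contr by (intro LIMSEQ_le) (auto simp: add.commute)
  then have "c2 \<le> c1" using \<delta>pos
    by (smt (verit) mult_pos_pos)
  with c12 have ceq: "c2 = c1" by simp
  have rlim: "(\<lambda>k. r k d) \<longlonglongrightarrow> c1" for d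
    by (rule tendsto_sandwich[OF _ _ c1, of _ mx]) (use mn_le le_mx c2 ceq in auto)
  have cpos: "c1 > 0"
  proof -
    have "V p (amn p) \<ge> mat_pow M p (amn p) j0 * x j0"
      unfolding V_def by (rule mvec_ge_term[OF Pnn xnn])
    moreover have "mat_pow M p (amn p) j0 * x j0 > 0" using pos xpos by simp
    ultimately have "V p (amn p) > 0" by linarith
    then have "mn p > 0" using amn[of p] lpos[of p "amn p"] unfolding r_def by (metis divide_pos_pos)
    moreover have "mn p \<le> c1" using incseq_le[OF inc c1] .
    ultimately show ?thesis by simp
  qed
  have "(\<lambda>k. mvec (mat_pow M k) x d / lam^k) \<longlonglongrightarrow> c1 * R d" for d
  proof -
    have "(\<lambda>k. r k d * R d) \<longlonglongrightarrow> c1 * R d" by (intro tendsto_intros rlim)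
    moreover have "r k d * R d = mvec (mat_pow M k) x d / lam^k" for k
      unfolding r_def V_def using Rpos[of d] lam by (simp add: field_simps)
    ultimately show ?thesis by simp
  qed
  then show ?thesis using cpos by blast
qed



lemma geom_avg:
  fixes a :: "nat \<Rightarrow> real"
  assumes a: "a \<longlonglongrightarrow> A" and lam: "lam > 1"
  shows "(\<lambda>m. (\<Sum>k<m. a k * lam^k) / lam^m) \<longlonglongrightarrow> A / (lam - 1)"
proof -
  define L where "L = A / (lam - 1)"
  define b where "b m = (\<Sum>k<m. a k * lam^k) / lam^m" for m
  define e where "e m = \<bar>b m - L\<bar>" for m
  have lpos: "lam^m > 0" for m using lam by simp
  have brec: "b (Suc m) = (b m + a m) / lam" for m
    unfolding b_def using lpos[of m] lam by (simp add: field_simps)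
  have Lrec: "L = (L + A) / lam" unfolding L_def using lam by (simp add: field_simps)
  have erec: "e (Suc m) \<le> (e m + \<bar>a m - A\<bar>) / lam" for m
  proof -
    have "b (Suc m) - L = ((b m - L) + (a m - A)) / lam"
      using brec[of m] Lrec lam by (simp add: field_simps)
    then have "e (Suc m) = \<bar>(b m - L) + (a m - A)\<bar> / lam" unfolding e_def using lam by simp
    also have "\<dots> \<le> (e m + \<bar>a m - A\<bar>) / lam" unfolding e_def
      using lam by (intro divide_right_mono abs_triangle_ineq) auto
    finally show ?thesis .
  qed
  show ?thesis unfolding b_def[symmetric] L_def[symmetric]
  proof (rule LIMSEQ_I)
    fix r :: real assume r: "r > 0"
    define \<epsilon> where "\<epsilon> = r / 2"
    have \<epsilon>: "\<epsilon> > 0" using r unfolding \<epsilon>_def by simp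
    obtain N where N: "\<forall>n\<ge>N. norm (a n - A) < \<epsilon> * (lam - 1)"
      using LIMSEQ_D[OF a, of "\<epsilon> * (lam - 1)"] \<epsilon> lam by auto
    have ind: "e (N + n) \<le> \<epsilon> + e N / lam^n" for n
    proof (induction n)
      case 0 then show ?case using \<epsilon> by simp
    next
      case (Suc n)
      have "e (N + Suc n) \<le> (e (N + n) + \<bar>a (N + n) - A\<bar>) / lam" using erec[of "N+n"] by simp
      also have "\<dots> \<le> (\<epsilon> + e N / lam^n + \<epsilon> * (lam - 1)) / lam"
        using Suc N[rule_format, of "N+n"] lam by (intro divide_right_mono) auto
      also have "\<dots> = \<epsilon> + e N / lam^(Suc n)" using lam by (simp add: field_simps)
      finally show ?case .
    qed
    have "(\<lambda>n. e N * inverse (lam^n)) \<longlonglongrightarrow> e N * 0"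
      by (intro tendsto_intros LIMSEQ_inverse_realpow_zero lam)
    then have X: "(\<lambda>n. e N * inverse (lam^n)) \<longlonglongrightarrow> 0" by simp
    obtain N2 where N2: "\<forall>n\<ge>N2. norm (e N * inverse (lam^n) - 0) < \<epsilon>"
      using LIMSEQ_D[OF X \<epsilon>] by blast
    have "\<forall>n\<ge>N + N2. norm (b n - L) < r"
    proof (intro allI impI)
      fix n assume n: "n \<ge> N + N2"
      define k where "k = n - N"
      have k: "n = N + k" "k \<ge> N2" using n unfolding k_def by auto
      have "e N / lam^k < \<epsilon>" using N2[rule_format, OF k(2)] e_def
        by (simp add: divide_inverse)
      then have "e n < \<epsilon> + \<epsilon>" using ind[of k] k(1) by simp
      then have "e n < r" unfolding \<epsilon>_def by simp
      then show "norm (b n - L) < r" unfolding e_def by simp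
    qed
    then show "\<exists>no. \<forall>n\<ge>no. norm (b n - L) < r" by blast
  qed
qed

lemma card_conc:
  assumes "finite A" "finite B" "\<And>x. x \<in> A \<Longrightarrow> length x = n"
  shows "card (conc A B) = card A * card B"
proof -
  have "conc A B = (\<lambda>(x,y). x@y) ` (A \<times> B)" unfolding conc_def by auto
  moreover have "inj_on (\<lambda>(x,y). x@y) (A \<times> B)"
    using assms(3) by (auto simp: inj_on_def append_eq_append_conv)
  ultimately show ?thesis by (simp add: card_image card_cartesian_product)
qed

lemma subst_pow_Nil[simp]: "subst_pow \<theta> m [] = {[]}"
  by (induction m) auto

lemma sum_single: "(\<Sum>j\<in>(UNIV::'a::finite set). f j * real (count_list [b] j)) = f b"
proof -
  have "(\<Sum>j\<in>(UNIV::'a set). f j * real (count_list [b] j)) = (\<Sum>j\<in>UNIV. if j = b then f b else 0)"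
    by (intro sum.cong) auto
  then show ?thesis by simp
qed

locale RS =
  fixes \<theta> :: "'a::finite \<Rightarrow> 'a list set" and lam :: real and R :: "'a \<Rightarrow> real"
  assumes rs: "is_random_subst \<theta>" and sc: "semi_compatible \<theta>"
    and prim: "primitive_matrix (subst_matrix \<theta>)"
    and ev: "is_PF_right_eigenvector (subst_matrix \<theta>) lam R"
begin

abbreviation "M \<equiv> subst_matrix \<theta>"
abbreviation "P k \<equiv> mat_pow M k"

definition lenw :: "nat \<Rightarrow> 'a \<Rightarrow> nat" where "lenw m b = length (SOME y. y \<in> subst_pow \<theta> m [b])"
definition Nm :: "nat \<Rightarrow> 'a \<Rightarrow> nat" where "Nm m b = card (subst_pow \<theta> m [b])"

lemma fin: "finite (subst_pow \<theta> m u)" and nonempty: "subst_pow \<theta> m u \<noteq> {}"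
  using subst_pow_fin[OF rs] by auto

lemma count_single: "y \<in> subst_pow \<theta> m [b] \<Longrightarrow> real (count_list y d) = P m d b"
  using count_pow[OF rs sc, of y m "[b]" d] sum_single[of "P m d" b] by simp

lemma len_real: "y \<in> subst_pow \<theta> m [b] \<Longrightarrow> real (length y) = (\<Sum>d\<in>UNIV. P m d b)"
  using count_single length_count[of y] by (simp add: of_nat_sum)

lemma some_in: "(SOME y. y \<in> subst_pow \<theta> m u) \<in> subst_pow \<theta> m u"
  using nonempty by (simp add: some_in_eq)

lemma lenw_real: "real (lenw m b) = (\<Sum>d\<in>UNIV. P m d b)"
  unfolding lenw_def using len_real[OF some_in] .

lemma len_pow: "y \<in> subst_pow \<theta> m [b] \<Longrightarrow> length y = lenw m b"
  using len_real lenw_real by (metis of_nat_eq_iff)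

lemma Nm_pos: "Nm m b \<ge> 1"
  unfolding Nm_def using fin nonempty by (simp add: Suc_le_eq card_gt_0_iff)

lemma Msum_ge: "(\<Sum>i\<in>UNIV. M i j) \<ge> 1"
proof -
  obtain u where u: "u \<in> \<theta> j" using rs unfolding is_random_subst_def by blast
  then have "u \<in> subst_pow \<theta> 1 [j]" by (simp)
  then have "real (length u) = (\<Sum>d\<in>UNIV. P 1 d j)" by (rule len_real)
  moreover have "P 1 = M" using mat_mult_id(1)[of M] by simp
  moreover have "u \<noteq> []" using u rs unfolding is_random_subst_def by auto
  ultimately show ?thesis by (metis One_nat_def Suc_le_eq length_greater_0_conv of_nat_1 of_nat_le_iff)
qed

lemma M_nonneg: "M i j \<ge> 0" unfolding subst_matrix_def by simp

lemma P_nonneg: "P k i j \<ge> 0" using mat_pow_nonneg M_nonneg by blast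

lemma ln_card_word:
  "ln (real (card (subst_pow \<theta> m v))) = (\<Sum>c\<in>UNIV. real (count_list v c) * ln (real (Nm m c)))"
proof (induction v)
  case Nil then show ?case by simp
next
  case (Cons c v)
  have eq: "subst_pow \<theta> m (c # v) = conc (subst_pow \<theta> m [c]) (subst_pow \<theta> m v)"
    using subst_pow_append[of \<theta> m "[c]" v] by simp
  have "card (subst_pow \<theta> m (c # v)) = Nm m c * card (subst_pow \<theta> m v)"
    unfolding eq Nm_def by (rule card_conc[OF fin fin len_pow])
  moreover have "card (subst_pow \<theta> m v) \<ge> 1" using fin nonempty by (simp add: Suc_le_eq card_gt_0_iff)
  ultimately have "ln (real (card (subst_pow \<theta> m (c # v)))) = ln (real (Nm m c)) + ln (real (card (subst_pow \<theta> m v)))"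
    using Nm_pos[of m c] by (simp add: ln_mult)
  also have "\<dots> = (\<Sum>d\<in>UNIV. (if d = c then ln (real (Nm m c)) else 0)) + (\<Sum>d\<in>UNIV. real (count_list v d) * ln (real (Nm m d)))"
    using Cons by simp
  also have "\<dots> = (\<Sum>d\<in>UNIV. real (count_list (c#v) d) * ln (real (Nm m d)))"
    unfolding sum.distrib[symmetric] by (intro sum.cong) (auto simp: algebra_simps)
  finally show ?case .
qed

lemma count_theta: "u \<in> \<theta> b \<Longrightarrow> real (count_list u c) = M c b"
  using count_sw[OF rs sc, of u "[b]" c] sum_single[of "M c" b] by simp

lemma ln_card_theta: "u \<in> \<theta> b \<Longrightarrow>
    ln (real (card (subst_pow \<theta> m u))) = (\<Sum>c\<in>UNIV. M c b * ln (real (Nm m c)))"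
  using ln_card_word count_theta by simp

lemma pow_Suc_single: "subst_pow \<theta> (Suc m) [b] = (\<Union>u\<in>\<theta> b. subst_pow \<theta> m u)"
  using subst_pow_Suc'[of \<theta> m "[b]"] by simp

lemma Nm_1: "ln (real (Nm 1 b)) = q1 \<theta> b"
  unfolding Nm_def q1_def by simp

lemma isc_rec:
  assumes isc: "identical_set_condition \<theta>" and m: "m \<ge> 1"
  shows "ln (real (Nm (Suc m) b)) = (\<Sum>c\<in>UNIV. M c b * ln (real (Nm m c)))"
proof -
  obtain u0 where u0: "u0 \<in> \<theta> b" using rs unfolding is_random_subst_def by blast
  have "(\<Union>u\<in>\<theta> b. subst_pow \<theta> m u) = subst_pow \<theta> m u0"
    using isc m u0 unfolding identical_set_condition_def by blast
  then have "Nm (Suc m) b = card (subst_pow \<theta> m u0)" unfolding Nm_def pow_Suc_single by simp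
  then show ?thesis using ln_card_theta[OF u0] by simp
qed

lemma dsc_rec:
  assumes dsc: "disjoint_set_condition \<theta>"
  shows "ln (real (Nm (Suc m) b)) = q1 \<theta> b + (\<Sum>c\<in>UNIV. M c b * ln (real (Nm m c)))"
proof -
  define K where "K = (\<Sum>c\<in>UNIV. M c b * ln (real (Nm m c)))"
  have finb: "finite (\<theta> b)" and neb: "\<theta> b \<noteq> {}" using rs unfolding is_random_subst_def by auto
  have disj: "\<forall>u\<in>\<theta> b. \<forall>v\<in>\<theta> b. u \<noteq> v \<longrightarrow> subst_pow \<theta> m u \<inter> subst_pow \<theta> m v = {}"
  proof (cases "m = 0")
    case True then show ?thesis by simp
  next
    case False then show ?thesis using dsc unfolding disjoint_set_condition_def by simp
  qed
  have cu: "real (card (subst_pow \<theta> m u)) = exp K" if "u \<in> \<theta> b" for u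
  proof -
    have "card (subst_pow \<theta> m u) > 0" using fin nonempty by (simp add: card_gt_0_iff)
    then have "real (card (subst_pow \<theta> m u)) = exp (ln (real (card (subst_pow \<theta> m u))))" by simp
    then show ?thesis using ln_card_theta[OF that] K_def by simp
  qed
  have "Nm (Suc m) b = (\<Sum>u\<in>\<theta> b. card (subst_pow \<theta> m u))"
    unfolding Nm_def pow_Suc_single by (rule card_UN_disjoint[OF finb]) (use fin disj in auto)
  then have "real (Nm (Suc m) b) = real (card (\<theta> b)) * exp K"
    using cu by (simp add: of_nat_sum)
  moreover have "card (\<theta> b) > 0" using finb neb by (simp add: card_gt_0_iff)
  ultimately show ?thesis unfolding K_def q1_def by (simp add: ln_mult)
qed

definition yq :: "nat \<Rightarrow> 'a \<Rightarrow> real" where "yq k b = (\<Sum>d\<in>UNIV. q1 \<theta> d * P k d b)"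

lemma yq_Suc: "yq (Suc k) b = (\<Sum>c\<in>UNIV. M c b * yq k c)"
  unfolding yq_def mat_pow.simps mat_mult_def sum_distrib_left
  by (subst sum.swap) (simp add: sum_distrib_left mult_ac)

lemma yq_0: "yq 0 b = q1 \<theta> b"
  unfolding yq_def using sum_single[of "q1 \<theta>" b] by (simp add: if_distrib cong: if_cong)

lemma isc_closed:
  assumes isc: "identical_set_condition \<theta>"
  shows "ln (real (Nm (Suc k) b)) = yq k b"
proof (induction k arbitrary: b)
  case 0 then show ?case using Nm_1 yq_0 by simp
next
  case (Suc k) then show ?case using isc_rec[OF isc, of "Suc k" b] yq_Suc by simp
qed

lemma dsc_closed:
  assumes dsc: "disjoint_set_condition \<theta>"
  shows "ln (real (Nm m b)) = (\<Sum>k<m. yq k b)"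
proof (induction m arbitrary: b)
  case 0 then show ?case by (simp add: Nm_def)
next
  case (Suc m)
  have "(\<Sum>k<Suc m. yq k b) = yq 0 b + (\<Sum>k<m. yq (Suc k) b)" by (rule sum.lessThan_Suc_shift)
  also have "(\<Sum>k<m. yq (Suc k) b) = (\<Sum>c\<in>UNIV. M c b * (\<Sum>k<m. yq k c))"
    unfolding yq_Suc sum_distrib_left by (rule sum.swap)
  finally show ?case using dsc_rec[OF dsc, of m b] Suc yq_0 by simp
qed

end


context RS begin

lemma Rpos: "R i > 0" using ev unfolding is_PF_right_eigenvector_def by auto
lemma Rsum: "(\<Sum>i\<in>UNIV. R i) = 1"
  using ev Rpos unfolding is_PF_right_eigenvector_def by (simp add: abs_of_pos)
lemma eig: "mvec M R i = lam * R i"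
  using ev unfolding is_PF_right_eigenvector_def mvec_def by auto

lemma prim_pos: "\<exists>p>0. \<forall>i j. P p i j > 0"
  using prim unfolding primitive_matrix_def by blast

lemma lam_pos: "lam > 0"
proof -
  obtain p where p: "p > 0" "\<And>i j. P p i j > 0" using prim_pos by blast
  then obtain p' where p': "p = Suc p'" by (cases p) auto
  fix i :: 'a
  have "0 < P p i i" using p by simp
  also have "P p i i = (\<Sum>k\<in>UNIV. M i k * P p' k i)"
    unfolding p' mat_pow_Suc' mat_mult_def ..
  finally have pos: "0 < (\<Sum>k\<in>UNIV. M i k * P p' k i)" .
  have "\<exists>k. M i k * P p' k i \<noteq> 0"
  proof (rule ccontr)
    assume "\<not> ?thesis"
    then have "(\<Sum>k\<in>UNIV. M i k * P p' k i) = 0" by (intro sum.neutral) auto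
    with pos show False by simp
  qed
  then obtain k where k: "M i k * P p' k i \<noteq> 0" by blast
  then have Mk: "M i k > 0" using M_nonneg[of i k] by (metis less_eq_real_def mult_zero_left)
  have "M i k * R k \<le> mvec M R i" by (rule mvec_ge_term) (auto intro: M_nonneg less_imp_le Rpos)
  then have "lam * R i > 0" using eig[of i] Mk Rpos[of k] by (smt (verit) mult_pos_pos)
  then show ?thesis using Rpos[of i] by (simp add: zero_less_mult_iff)
qed

lemma lam_ge1: "lam \<ge> 1"
proof -
  have "lam = (\<Sum>i\<in>UNIV. lam * R i)" using Rsum by (simp add: sum_distrib_left[symmetric])
  also have "\<dots> = (\<Sum>i\<in>UNIV. \<Sum>j\<in>UNIV. M i j * R j)" using eig by (simp add: mvec_def)
  also have "\<dots> = (\<Sum>j\<in>UNIV. (\<Sum>i\<in>UNIV. M i j) * R j)"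
    by (subst sum.swap) (simp add: sum_distrib_right)
  also have "\<dots> \<ge> (\<Sum>j\<in>UNIV. 1 * R j)"
    by (intro sum_mono mult_right_mono Msum_ge) (auto intro: less_imp_le Rpos)
  finally show ?thesis using Rsum by simp
qed

lemma col_conv: "\<exists>c>0. \<forall>d. (\<lambda>k. P k d b / lam^k) \<longlonglongrightarrow> c * R d"
proof -
  obtain p where p: "p > 0" "\<And>i j. P p i j > 0" using prim_pos by blast
  define x where "x j = (if j = b then 1 else (0::real))" for j
  have mx: "mvec (P k) x d = P k d b" for k d
  proof -
    have "mvec (P k) x d = (\<Sum>j\<in>UNIV. if j = b then P k d b else 0)"
      unfolding mvec_def x_def by (intro sum.cong) auto
    then show ?thesis by simp
  qed
  have "\<exists>c>0. \<forall>d. (\<lambda>k. mvec (P k) x d / lam^k) \<longlonglongrightarrow> c * R d"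
    by (rule pf_conv[OF M_nonneg p(2) Rpos eig lam_pos, of x b]) (auto simp: x_def)
  then show ?thesis unfolding mx .
qed

definition Q where "Q = (\<Sum>d\<in>UNIV. q1 \<theta> d * R d)"

lemma conv_lenw_y: obtains c where "c > 0" "(\<lambda>k. real (lenw k b) / lam^k) \<longlonglongrightarrow> c"
  "(\<lambda>k. yq k b / lam^k) \<longlonglongrightarrow> c * Q"
proof -
  obtain c where c: "c > 0" "\<And>d. (\<lambda>k. P k d b / lam^k) \<longlonglongrightarrow> c * R d" using col_conv by blast
  have "(\<lambda>k. \<Sum>d\<in>UNIV. P k d b / lam^k) \<longlonglongrightarrow> (\<Sum>d\<in>UNIV. c * R d)"
    by (intro tendsto_sum c(2))
  moreover have "(\<Sum>d\<in>UNIV. c * R d) = c" using Rsum by (simp add: sum_distrib_left[symmetric])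
  moreover have "(\<Sum>d\<in>UNIV. P k d b / lam^k) = real (lenw k b) / lam^k" for k
    unfolding lenw_real by (simp add: sum_divide_distrib)
  ultimately have A: "(\<lambda>k. real (lenw k b) / lam^k) \<longlonglongrightarrow> c" by simp
  have "(\<lambda>k. \<Sum>d\<in>UNIV. q1 \<theta> d * (P k d b / lam^k)) \<longlonglongrightarrow> (\<Sum>d\<in>UNIV. q1 \<theta> d * (c * R d))"
    by (intro tendsto_sum tendsto_mult tendsto_const c(2))
  moreover have "(\<Sum>d\<in>UNIV. q1 \<theta> d * (c * R d)) = c * Q"
    unfolding Q_def by (simp add: sum_distrib_left mult_ac)
  moreover have "(\<Sum>d\<in>UNIV. q1 \<theta> d * (P k d b / lam^k)) = yq k b / lam^k" for k
    unfolding yq_def by (simp add: sum_divide_distrib)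
  ultimately have B: "(\<lambda>k. yq k b / lam^k) \<longlonglongrightarrow> c * Q" by simp
  show ?thesis using that c(1) A B by blast
qed

lemma ratio_isc:
  assumes isc: "identical_set_condition \<theta>"
  shows "(\<lambda>m. ln (real (Nm m b)) / real (lenw m b)) \<longlonglongrightarrow> Q / lam"
proof -
  obtain c where c: "c > 0" "(\<lambda>k. real (lenw k b) / lam^k) \<longlonglongrightarrow> c"
    "(\<lambda>k. yq k b / lam^k) \<longlonglongrightarrow> c * Q" by (rule conv_lenw_y)
  have "(\<lambda>k. (yq k b / lam^k) / ((real (lenw (Suc k) b) / lam^(Suc k)) * lam)) \<longlonglongrightarrow> (c * Q) / (c * lam)"
    using lam_pos c by (intro tendsto_intros LIMSEQ_Suc) auto
  moreover have "(yq k b / lam^k) / ((real (lenw (Suc k) b) / lam^(Suc k)) * lam) = ln (real (Nm (Suc k) b)) / real (lenw (Suc k) b)" for k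
    using lam_pos by (simp add: isc_closed[OF isc] field_simps)
  moreover have "(c * Q) / (c * lam) = Q / lam" using c(1) by simp
  ultimately have "(\<lambda>k. ln (real (Nm (Suc k) b)) / real (lenw (Suc k) b)) \<longlonglongrightarrow> Q / lam" by simp
  then show ?thesis by (rule LIMSEQ_imp_Suc)
qed

lemma ratio_dsc:
  assumes dsc: "disjoint_set_condition \<theta>" and lam1: "lam > 1"
  shows "(\<lambda>m. ln (real (Nm m b)) / real (lenw m b)) \<longlonglongrightarrow> Q / (lam - 1)"
proof -
  obtain c where c: "c > 0" "(\<lambda>k. real (lenw k b) / lam^k) \<longlonglongrightarrow> c"
    "(\<lambda>k. yq k b / lam^k) \<longlonglongrightarrow> c * Q" by (rule conv_lenw_y)
  have g: "(\<lambda>m. (\<Sum>k<m. (yq k b / lam^k) * lam^k) / lam^m) \<longlonglongrightarrow> (c * Q) / (lam - 1)"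
    by (rule geom_avg[OF c(3) lam1])
  have A: "(\<lambda>m. ((\<Sum>k<m. (yq k b / lam^k) * lam^k) / lam^m) / (real (lenw m b) / lam^m)) \<longlonglongrightarrow> ((c * Q) / (lam - 1)) / c"
    using c by (intro tendsto_intros g) auto
  have B: "((\<Sum>k<m. (yq k b / lam^k) * lam^k) / lam^m) / (real (lenw m b) / lam^m) = ln (real (Nm m b)) / real (lenw m b)" for m
  proof -
    have s: "(\<Sum>k<m. (yq k b / lam^k) * lam^k) = ln (real (Nm m b))"
      unfolding dsc_closed[OF dsc] using lam_pos by (intro sum.cong) auto
    have "lam^m \<noteq> 0" using lam_pos by simp
    then show ?thesis unfolding s by (cases "lenw m b = 0") (simp_all add: field_simps)
  qed
  have C: "((c * Q) / (lam - 1)) / c = Q / (lam - 1)" using c(1) by simp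
  show ?thesis using A unfolding B C .
qed

lemma lenw_inf:
  assumes lam1: "lam > 1"
  shows "filterlim (\<lambda>m. real (lenw m b)) at_top sequentially"
proof -
  obtain c where c: "c > 0" "(\<lambda>k. real (lenw k b) / lam^k) \<longlonglongrightarrow> c"
    "(\<lambda>k. yq k b / lam^k) \<longlonglongrightarrow> c * Q" by (rule conv_lenw_y)
  have "filterlim (\<lambda>k. inverse (inverse (lam^k))) at_top sequentially"
    by (rule filterlim_inverse_at_top[OF LIMSEQ_inverse_realpow_zero[OF lam1]]) (use lam_pos in auto)
  then have "filterlim (\<lambda>k. lam^k) at_top sequentially" by simp
  then have "filterlim (\<lambda>k. (real (lenw k b) / lam^k) * lam^k) at_top sequentially"
    by (rule filterlim_tendsto_pos_mult_at_top[OF c(2) c(1)])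
  moreover have "(real (lenw k b) / lam^k) * lam^k = real (lenw k b)" for k using lam_pos by simp
  ultimately show ?thesis by simp
qed

lemma Q_nonneg: "Q \<ge> 0"
proof -
  have "q1 \<theta> d \<ge> 0" for d
  proof -
    have "card (\<theta> d) \<ge> 1" using rs unfolding is_random_subst_def by (simp add: Suc_le_eq card_gt_0_iff)
    then show ?thesis unfolding q1_def by simp
  qed
  then show ?thesis unfolding Q_def by (intro sum_nonneg mult_nonneg_nonneg) (auto intro: less_imp_le Rpos)
qed

end


context RS begin

definition legal where "legal w \<longleftrightarrow> w \<in> language \<theta>"

lemma legal_sub: "legal w \<Longrightarrow> sublist v w \<Longrightarrow> legal v"
  unfolding legal_def language_def using sublist_order.order_trans by blast

lemma legal_pow: "u \<in> subst_pow \<theta> m [a] \<Longrightarrow> legal u"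
  unfolding legal_def language_def using sublist_order.order_refl by blast

lemma append3_pow: "x \<in> subst_pow \<theta> m u \<Longrightarrow> y \<in> subst_pow \<theta> m v \<Longrightarrow> z \<in> subst_pow \<theta> m w \<Longrightarrow>
    x @ y @ z \<in> subst_pow \<theta> m (u @ v @ w)"
  unfolding subst_pow_append conc_def by blast

lemma pow_mono_word: "v \<in> subst_pow \<theta> j u \<Longrightarrow> subst_pow \<theta> m v \<subseteq> subst_pow \<theta> (m + j) u"
  by (auto simp: subst_pow_add)

lemma legal_subst: assumes "legal v" "y \<in> subst_pow \<theta> m v" shows "legal y"
proof -
  obtain a j u0 where u0: "u0 \<in> subst_pow \<theta> j [a]" "sublist v u0"
    using assms(1) unfolding legal_def language_def by blast
  then obtain ps ss where ps: "u0 = ps @ v @ ss" unfolding sublist_def by blast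
  define p where "p = (SOME x. x \<in> subst_pow \<theta> m ps)"
  define s where "s = (SOME x. x \<in> subst_pow \<theta> m ss)"
  have "p @ y @ s \<in> subst_pow \<theta> m u0"
    unfolding ps p_def s_def by (rule append3_pow[OF some_in assms(2) some_in])
  then have "p @ y @ s \<in> subst_pow \<theta> (m + j) [a]" using pow_mono_word[OF u0(1)] by blast
  then have "legal (p @ y @ s)" by (rule legal_pow)
  then show "legal y" by (rule legal_sub) simp
qed

lemma self_occ: obtains p z where "p > 0" "z \<in> subst_pow \<theta> p [a]" "a \<in> set z"
proof -
  obtain p where p: "p > 0" "\<And>i j. P p i j > 0" using prim_pos by blast
  define z where "z = (SOME x. x \<in> subst_pow \<theta> p [a])"
  have z: "z \<in> subst_pow \<theta> p [a]" unfolding z_def by (rule some_in)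
  have "real (count_list z a) > 0" using count_single[OF z, of a] p(2) by simp
  then have "a \<in> set z" by (metis count_list_0_iff less_irrefl of_nat_0)
  then show thesis using that p(1) z by blast
qed

lemma lift_step:
  assumes "z \<in> subst_pow \<theta> p [a]" "a \<in> set z" "u \<in> subst_pow \<theta> j [a]"
  shows "\<exists>u'\<in>subst_pow \<theta> (j + p) [a]. sublist u u'"
proof -
  obtain z1 z2 where zs: "z = z1 @ a # z2" using split_list[OF assms(2)] by blast
  define e1 where "e1 = (SOME x. x \<in> subst_pow \<theta> j z1)"
  define e2 where "e2 = (SOME x. x \<in> subst_pow \<theta> j z2)"
  have "e1 @ u @ e2 \<in> subst_pow \<theta> j (z1 @ [a] @ z2)"
    unfolding e1_def e2_def by (rule append3_pow[OF some_in assms(3) some_in])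
  then have "e1 @ u @ e2 \<in> subst_pow \<theta> (j + p) [a]" using pow_mono_word[OF assms(1)] zs by auto
  then show ?thesis by blast
qed

lemma lift: assumes "legal w" shows "\<exists>a j u. j \<ge> m \<and> u \<in> subst_pow \<theta> j [a] \<and> sublist w u"
proof -
  obtain a j u where u: "u \<in> subst_pow \<theta> j [a]" "sublist w u"
    using assms unfolding legal_def language_def by blast
  obtain p z where pz: "p > 0" "z \<in> subst_pow \<theta> p [a]" "a \<in> set z" by (rule self_occ)
  have "\<exists>u'\<in>subst_pow \<theta> (j + n * p) [a]. sublist w u'" for n
  proof (induction n)
    case 0 then show ?case using u by auto
  next
    case (Suc n)
    then obtain u' where u': "u' \<in> subst_pow \<theta> (j + n * p) [a]" "sublist w u'" by blast
    obtain u'' where "u'' \<in> subst_pow \<theta> (j + n * p + p) [a]" "sublist u' u''"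
      using lift_step[OF pz(2,3) u'(1)] by blast
    moreover have "j + Suc n * p = j + n * p + p" by simp
    ultimately show ?case using u'(2) sublist_order.order_trans by metis
  qed
  from this[of m] obtain u' where "u' \<in> subst_pow \<theta> (j + m * p) [a]" "sublist w u'" by blast
  moreover have "j + m * p \<ge> m" using pz(1) by (simp add: trans_le_add2)
  ultimately show ?thesis by blast
qed

definition Lmax where "Lmax m = Max (range (lenw m))"
definition Lmin where "Lmin m = Min (range (lenw m))"

lemma lenw_le_Lmax: "lenw m c \<le> Lmax m" unfolding Lmax_def by simp
lemma Lmin_le_lenw: "Lmin m \<le> lenw m c" unfolding Lmin_def by simp

lemma trimL: "y \<in> subst_pow \<theta> m v \<Longrightarrow> y = ps @ w @ ss \<Longrightarrow> w \<noteq> [] \<Longrightarrow>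
   \<exists>v' ps'. suffix v' v \<and> ps' @ w @ ss \<in> subst_pow \<theta> m v' \<and> length ps' < Lmax m"
proof (induction v arbitrary: y ps)
  case Nil then show ?case by simp
next
  case (Cons c v)
  from Cons.prems(1) obtain y1 y2 where y: "y = y1 @ y2" "y1 \<in> subst_pow \<theta> m [c]" "y2 \<in> subst_pow \<theta> m v"
    using subst_pow_append[of \<theta> m "[c]" v] by (auto simp: conc_def)
  show ?case
  proof (cases "length y1 \<le> length ps")
    case True
    from y(1) Cons.prems(2) have "y1 @ y2 = ps @ (w @ ss)" by simp
    then have "y1 = take (length y1) ps" "y2 = drop (length y1) ps @ w @ ss"
      using True by (auto simp: append_eq_append_conv_if)
    then obtain v' ps' where "suffix v' v" "ps' @ w @ ss \<in> subst_pow \<theta> m v'" "length ps' < Lmax m"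
      using Cons.IH[OF y(3)] Cons.prems(3) by blast
    then show ?thesis by (meson suffix_ConsI)
  next
    case False
    then have "length ps < lenw m c" using len_pow[OF y(2)] by simp
    then have "length ps < Lmax m" using lenw_le_Lmax[of m c] by simp
    then show ?thesis using Cons.prems by (intro exI[of _ "c#v"] exI[of _ ps]) auto
  qed
qed

lemma trimR: "y \<in> subst_pow \<theta> m v \<Longrightarrow> y = ps @ w @ ss \<Longrightarrow> w \<noteq> [] \<Longrightarrow>
   \<exists>v' ss'. prefix v' v \<and> ps @ w @ ss' \<in> subst_pow \<theta> m v' \<and> length ss' < Lmax m"
proof (induction v arbitrary: y ss rule: rev_induct)
  case Nil then show ?case by simp
next
  case (snoc c v)
  from snoc.prems(1) obtain y1 y2 where y: "y = y2 @ y1" "y1 \<in> subst_pow \<theta> m [c]" "y2 \<in> subst_pow \<theta> m v"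
    using subst_pow_append[of \<theta> m v "[c]"] by (auto simp: conc_def)
  show ?case
  proof (cases "length y1 \<le> length ss")
    case True
    from y(1) snoc.prems(2) have e: "(ps @ w) @ ss = y2 @ y1" by simp
    have len: "length (ps @ w) \<le> length y2" using arg_cong[OF e, of length] True by simp
    have gen: "A @ ss = y2 @ y1 \<Longrightarrow> length A \<le> length y2 \<Longrightarrow> y2 = A @ drop (length A) y2" for A
      by (metis append_eq_append_conv_if append_take_drop_id)
    have "y2 = ps @ w @ drop (length (ps @ w)) y2" using gen[OF e len] by simp
    then obtain v' ss' where v': "prefix v' v" "ps @ w @ ss' \<in> subst_pow \<theta> m v'" "length ss' < Lmax m"
      using snoc.IH[OF y(3)] snoc.prems(3) by blast
    have "prefix v' (v @ [c])" using v'(1) by (auto simp: prefix_def)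
    then show ?thesis using v' by blast
  next
    case False
    then have "length ss < lenw m c" using len_pow[OF y(2)] by simp
    then have "length ss < Lmax m" using lenw_le_Lmax[of m c] by simp
    then show ?thesis using snoc.prems by (intro exI[of _ "v @ [c]"] exI[of _ ss]) auto
  qed
qed

lemma decomp:
  assumes "legal w" "w \<noteq> []"
  shows "\<exists>v y. legal v \<and> y \<in> subst_pow \<theta> m v \<and> sublist w y \<and> length y < length w + 2 * Lmax m"
proof -
  obtain a j u where u: "j \<ge> m" "u \<in> subst_pow \<theta> j [a]" "sublist w u" using lift[OF assms(1)] by blast
  have "subst_pow \<theta> (m + (j - m)) [a] = (\<Union>v\<in>subst_pow \<theta> (j - m) [a]. subst_pow \<theta> m v)"
    by (rule subst_pow_add)
  then obtain v0 where v0: "v0 \<in> subst_pow \<theta> (j - m) [a]" "u \<in> subst_pow \<theta> m v0" using u by auto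
  obtain ps ss where pss: "u = ps @ w @ ss" using u(3) unfolding sublist_def by blast
  obtain v1 ps1 where v1: "suffix v1 v0" "ps1 @ w @ ss \<in> subst_pow \<theta> m v1" "length ps1 < Lmax m"
    using trimL[OF v0(2) pss assms(2)] by blast
  obtain v2 ss2 where v2: "prefix v2 v1" "ps1 @ w @ ss2 \<in> subst_pow \<theta> m v2" "length ss2 < Lmax m"
    using trimR[OF v1(2) refl assms(2)] by blast
  have "sublist v2 v0" using v1(1) v2(1) by (meson prefix_imp_sublist suffix_imp_sublist sublist_order.order_trans)
  then have "legal v2" using legal_sub legal_pow[OF v0(1)] by blast
  moreover have "length (ps1 @ w @ ss2) < length w + 2 * Lmax m" using v1(3) v2(3) by simp
  ultimately show ?thesis using v2(2) by blast
qed

end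


context RS begin

definition wl :: "nat \<Rightarrow> 'a list \<Rightarrow> nat" where "wl m v = sum_list (map (lenw m) v)"

lemma len_word: "y \<in> subst_pow \<theta> m v \<Longrightarrow> length y = wl m v"
proof (induction v arbitrary: y)
  case Nil then show ?case by (simp add: wl_def)
next
  case (Cons c v)
  from Cons.prems obtain y1 y2 where y: "y = y1 @ y2" "y1 \<in> subst_pow \<theta> m [c]" "y2 \<in> subst_pow \<theta> m v"
    using subst_pow_append[of \<theta> m "[c]" v] by (auto simp: conc_def)
  then show ?case using Cons.IH len_pow by (simp add: wl_def)
qed

lemma wl_count: "real (wl m v) = (\<Sum>c\<in>UNIV. real (count_list v c) * real (lenw m c))"
  unfolding wl_def using sum_list_map_eq_sum_count2[of v UNIV "lenw m"] by (simp add: of_nat_sum)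

lemma lenw_ge1: "lenw m c \<ge> 1"
proof -
  have "[c] \<noteq> []" by simp
  have ne: "y \<noteq> []" if "y \<in> subst_pow \<theta> k u" "u \<noteq> []" for k u y
    using that
  proof (induction k arbitrary: u y)
    case 0 then show ?case by simp
  next
    case (Suc k)
    then obtain v where v: "v \<in> subst_word \<theta> u" "y \<in> subst_pow \<theta> k v" unfolding subst_pow_Suc' by auto
    have "v \<noteq> []"
    proof -
      obtain a u' where "u = a # u'" using Suc.prems(2) by (cases u) auto
      then obtain w v' where "v = w @ v'" "w \<in> \<theta> a" using v(1) by auto
      then show ?thesis using rs unfolding is_random_subst_def by auto
    qed
    then show ?case using Suc.IH v(2) by blast
  qed
  have "(SOME y. y \<in> subst_pow \<theta> m [c]) \<noteq> []" using ne[OF some_in] by simp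
  then show ?thesis unfolding lenw_def by (simp add: Suc_le_eq)
qed

lemma wl_ge_len: "length v \<le> wl m v"
proof -
  have "length v = sum_list (map (\<lambda>_. 1::nat) v)" by (induction v) auto
  also have "\<dots> \<le> wl m v" unfolding wl_def by (intro sum_list_mono lenw_ge1)
  finally show ?thesis .
qed

lemma wl_Lmin: "length v * Lmin m \<le> wl m v"
proof -
  have "length v * Lmin m = sum_list (map (\<lambda>_. Lmin m) v)" by (induction v) auto
  also have "\<dots> \<le> wl m v" unfolding wl_def by (intro sum_list_mono Lmin_le_lenw)
  finally show ?thesis .
qed

lemma Lmin_ge1: "Lmin m \<ge> 1"
proof -
  have "Lmin m \<in> range (lenw m)" unfolding Lmin_def by (intro Min_in) auto
  then show ?thesis using lenw_ge1 by auto
qed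

lemma card_pow_pos: "card (subst_pow \<theta> m v) > 0"
  using fin nonempty by (simp add: card_gt_0_iff)

lemma ln_card_ub:
  assumes "\<And>c. ln (real (Nm m c)) \<le> K * real (lenw m c)"
  shows "ln (real (card (subst_pow \<theta> m v))) \<le> K * real (wl m v)"
proof -
  have "ln (real (card (subst_pow \<theta> m v))) = (\<Sum>c\<in>UNIV. real (count_list v c) * ln (real (Nm m c)))"
    by (rule ln_card_word)
  also have "\<dots> \<le> (\<Sum>c\<in>UNIV. real (count_list v c) * (K * real (lenw m c)))"
    by (intro sum_mono mult_left_mono assms) auto
  also have "\<dots> = K * real (wl m v)" unfolding wl_count by (simp add: sum_distrib_left mult_ac)
  finally show ?thesis .
qed

lemma ln_card_lb:
  assumes "\<And>c. K * real (lenw m c) \<le> ln (real (Nm m c))"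
  shows "K * real (wl m v) \<le> ln (real (card (subst_pow \<theta> m v)))"
proof -
  have "K * real (wl m v) = (\<Sum>c\<in>UNIV. real (count_list v c) * (K * real (lenw m c)))"
    unfolding wl_count by (simp add: sum_distrib_left mult_ac)
  also have "\<dots> \<le> (\<Sum>c\<in>UNIV. real (count_list v c) * ln (real (Nm m c)))"
    by (intro sum_mono mult_left_mono assms) auto
  also have "\<dots> = ln (real (card (subst_pow \<theta> m v)))" by (rule ln_card_word[symmetric])
  finally show ?thesis .
qed

lemma fin_lang: "finite (language_len \<theta> l)"
proof -
  have "language_len \<theta> l \<subseteq> {xs. set xs \<subseteq> UNIV \<and> length xs = l}" unfolding language_len_def by auto
  then show ?thesis using finite_lists_length_eq[of "UNIV::'a set" l] finite_subset by auto
qed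

lemma legal_lang: "legal w \<Longrightarrow> length w = l \<Longrightarrow> w \<in> language_len \<theta> l"
  unfolding legal_def language_len_def by auto

lemma lower:
  assumes lb: "\<And>c. K * real (lenw m c) \<le> ln (real (Nm m c))" and lam1: "lam > 1"
  shows "card (language_len \<theta> l) \<ge> 1 \<and>
    K * real l - \<bar>K\<bar> * real (Lmax m) \<le> ln (real (card (language_len \<theta> l)))"
proof -
  fix a :: 'a
  have "\<forall>\<^sub>F j in sequentially. real (lenw j a) \<ge> real (l + 1)"
    using lenw_inf[OF lam1, of a] by (simp add: filterlim_at_top)
  then obtain N where "\<forall>n\<ge>N. real (lenw n a) \<ge> real (l + 1)" unfolding eventually_sequentially by blast
  then have j: "real (lenw N a) \<ge> real (l + 1)" by blast
  define u where "u = (SOME x. x \<in> subst_pow \<theta> N [a])"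
  have u: "u \<in> subst_pow \<theta> N [a]" unfolding u_def by (rule some_in)
  have ul: "length u \<ge> l + 1" using len_pow[OF u] j by simp
  have legu: "legal u" by (rule legal_pow[OF u])
  define S where "S = {i. i \<le> l \<and> wl m (take i u) \<le> l}"
  have finS: "finite S" unfolding S_def by auto
  have "0 \<in> S" unfolding S_def wl_def by simp
  define J where "J = Max S"
  have JS: "J \<in> S" unfolding J_def using finS \<open>0 \<in> S\<close> by (intro Max_in) auto
  then have Jl: "J \<le> l" and wJ: "wl m (take J u) \<le> l" unfolding S_def by auto
  have Ju: "J < length u" using Jl ul by simp
  have wJ1: "wl m (take (Suc J) u) > l"
  proof (cases "Suc J \<le> l")
    case True
    have "Suc J \<notin> S" using Max_ge[OF finS, of "Suc J"] unfolding J_def[symmetric] by auto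
    then show ?thesis using True unfolding S_def by auto
  next
    case False
    then have "Suc J = l + 1" using Jl by simp
    moreover have "length (take (Suc J) u) = Suc J" using Ju by simp
    ultimately show ?thesis using wl_ge_len[of "take (Suc J) u" m] by simp
  qed
  define v where "v = take J u"
  define c where "c = u ! J"
  have tS: "take (Suc J) u = v @ [c]" unfolding v_def c_def using Ju by (simp add: take_Suc_conv_app_nth)
  have wlvc: "wl m (v @ [c]) = wl m v + lenw m c" by (simp add: wl_def)
  have wv: "wl m v \<le> l" "l < wl m v + Lmax m"
    using wJ wJ1 tS wlvc lenw_le_Lmax[of m c] unfolding v_def by auto
  have legvc: "legal (v @ [c])" using legal_sub[OF legu] tS by (metis sublist_take)
  define z0 where "z0 = (SOME x. x \<in> subst_pow \<theta> m [c])"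
  have z0: "z0 \<in> subst_pow \<theta> m [c]" unfolding z0_def by (rule some_in)
  define f where "f x = take l (x @ z0)" for x
  have fin_img: "f ` subst_pow \<theta> m v \<subseteq> language_len \<theta> l"
  proof
    fix w assume "w \<in> f ` subst_pow \<theta> m v"
    then obtain x where x: "x \<in> subst_pow \<theta> m v" "w = f x" by blast
    have xz: "x @ z0 \<in> subst_pow \<theta> m (v @ [c])"
      using x(1) z0 unfolding subst_pow_append conc_def by blast
    have "legal (x @ z0)" by (rule legal_subst[OF legvc xz])
    then have "legal w" unfolding x(2) f_def by (rule legal_sub) (rule sublist_take)
    moreover have "length (x @ z0) > l" using len_word[OF xz] wJ1 tS unfolding v_def by simp
    then have "length w = l" unfolding x(2) f_def by simp
    ultimately show "w \<in> language_len \<theta> l" by (rule legal_lang)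
  qed
  have inj: "inj_on f (subst_pow \<theta> m v)"
  proof (rule inj_onI)
    fix x x' assume x: "x \<in> subst_pow \<theta> m v" and x': "x' \<in> subst_pow \<theta> m v" and e: "f x = f x'"
    have lx: "length x = wl m v" "length x' = wl m v" using len_word x x' by auto
    have "take (wl m v) (f x) = x" unfolding f_def using lx wv(1) by (simp add: min_def)
    moreover have "take (wl m v) (f x') = x'" unfolding f_def using lx wv(1) by (simp add: min_def)
    ultimately show "x = x'" using e by metis
  qed
  have cardle: "card (subst_pow \<theta> m v) \<le> card (language_len \<theta> l)"
    using card_inj_on_le[OF inj fin_img fin_lang] .
  then have c1: "card (language_len \<theta> l) \<ge> 1" using card_pow_pos[of m v] by simp
  have "K * real (wl m v) \<le> ln (real (card (subst_pow \<theta> m v)))" by (rule ln_card_lb[OF lb])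
  also have "\<dots> \<le> ln (real (card (language_len \<theta> l)))"
    using cardle card_pow_pos[of m v] by simp
  finally have A: "K * real (wl m v) \<le> ln (real (card (language_len \<theta> l)))" .
  have "K * real l - \<bar>K\<bar> * real (Lmax m) \<le> K * real (wl m v)"
  proof (cases "K \<ge> 0")
    case True
    have "real l \<le> real (wl m v) + real (Lmax m)" using wv(2) by simp
    then have "K * real l \<le> K * real (wl m v) + K * real (Lmax m)"
      using True by (metis distrib_left mult_left_mono)
    then show ?thesis using True by simp
  next
    case False
    have "K * real l \<le> K * real (wl m v)" using False wv(1) by (intro mult_left_mono_neg) auto
    then show ?thesis by (smt (verit) abs_ge_zero mult_nonneg_nonneg of_nat_0_le_iff)
  qed
  then show ?thesis using A c1 by linarith
qed

end


lemma card_sub_len: "card {w. sublist w y \<and> length w = l} \<le> length y + 1"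
proof -
  have "{w. sublist w y \<and> length w = l} \<subseteq> (\<lambda>i. take l (drop i y)) ` {..length y}"
  proof
    fix w assume "w \<in> {w. sublist w y \<and> length w = l}"
    then obtain ps ss where "y = ps @ w @ ss" "length w = l" unfolding sublist_def by blast
    then have "w = take l (drop (length ps) y)" "length ps \<le> length y" by auto
    then show "w \<in> (\<lambda>i. take l (drop i y)) ` {..length y}" by auto
  qed
  then have "card {w. sublist w y \<and> length w = l} \<le> card ((\<lambda>i. take l (drop i y)) ` {..length y})"
    by (rule card_mono[rotated]) auto
  also have "\<dots> \<le> card {..length y}" by (rule card_image_le) auto
  finally show ?thesis by simp
qed

context RS begin

lemma upper:
  assumes ub: "\<And>c. ln (real (Nm m c)) \<le> K * real (lenw m c)" and K: "K \<ge> 0" and l: "l \<ge> 1"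
  shows "ln (real (card (language_len \<theta> l))) \<le> 2 * ln (real (l + 2 * Lmax m) + 1)
     + real (l + 2 * Lmax m) / real (Lmin m) * ln (real (card (UNIV::'a set))) + K * real (l + 2 * Lmax m)"
proof -
  define B where "B = l + 2 * Lmax m"
  define V where "V = {v. wl m v < B}"
  define S where "S y = {w. sublist w y \<and> length w = l}" for y :: "'a list"
  define D where "D = B div Lmin m"
  define n where "n = card (UNIV::'a set)"
  have n1: "n \<ge> 1" unfolding n_def by (simp add: Suc_le_eq finite_UNIV_card_ge_0)
  have B1: "B \<ge> 1" using l unfolding B_def by simp
  have Lmin_pos: "Lmin m > 0" using Lmin_ge1[of m] by simp
  have Vsub: "V \<subseteq> {v. set v \<subseteq> UNIV \<and> length v \<le> D}"
  proof
    fix v assume "v \<in> V"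
    then have "length v * Lmin m \<le> B" using wl_Lmin[of v m] unfolding V_def by simp
    then show "v \<in> {v. set v \<subseteq> UNIV \<and> length v \<le> D}"
      unfolding D_def using less_eq_div_iff_mult_less_eq[OF Lmin_pos] by simp
  qed
  have finL: "finite {v. set v \<subseteq> (UNIV::'a set) \<and> length v \<le> D}"
    by (rule finite_lists_length_le) simp
  have finV: "finite V" using Vsub finL finite_subset by blast
  have cardV: "card V \<le> (D + 1) * n ^ D"
  proof -
    have "card V \<le> card {v. set v \<subseteq> (UNIV::'a set) \<and> length v \<le> D}" by (rule card_mono[OF finL Vsub])
    also have "\<dots> = (\<Sum>i\<le>D. n ^ i)" unfolding n_def by (rule card_lists_length_le) simp
    also have "\<dots> \<le> (\<Sum>i\<le>D. n ^ D)" by (intro sum_mono power_increasing) (use n1 in auto)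
    finally show ?thesis by simp
  qed
  have finS: "finite (S y)" for y
  proof -
    have "S y \<subseteq> set (sublists y)" unfolding S_def set_sublists_eq by auto
    then show ?thesis using finite_subset by blast
  qed
  have cover: "language_len \<theta> l \<subseteq> (\<Union>v\<in>V. \<Union>y\<in>subst_pow \<theta> m v. S y)"
  proof
    fix w assume w: "w \<in> language_len \<theta> l"
    then have lw: "legal w" "length w = l" unfolding language_len_def legal_def by auto
    then have "w \<noteq> []" using l by auto
    obtain v y where vy: "legal v" "y \<in> subst_pow \<theta> m v" "sublist w y" "length y < length w + 2 * Lmax m"
      using decomp[OF lw(1) \<open>w \<noteq> []\<close>, of m] by blast
    then have "v \<in> V" unfolding V_def B_def using len_word[OF vy(2)] lw(2) by simp
    moreover have "w \<in> S y" unfolding S_def using vy lw by simp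
    ultimately show "w \<in> (\<Union>v\<in>V. \<Union>y\<in>subst_pow \<theta> m v. S y)" using vy(2) by blast
  qed
  have cS: "card (S y) \<le> B" if "v \<in> V" "y \<in> subst_pow \<theta> m v" for v y
    using card_sub_len[of y l] len_word[OF that(2)] that(1) unfolding S_def V_def by simp
  have cP: "real (card (subst_pow \<theta> m v)) \<le> exp (K * real B)" if "v \<in> V" for v
  proof -
    have "ln (real (card (subst_pow \<theta> m v))) \<le> K * real (wl m v)" by (rule ln_card_ub[OF ub])
    also have "\<dots> \<le> K * real B" using that K unfolding V_def by (intro mult_left_mono) auto
    finally have le: "ln (real (card (subst_pow \<theta> m v))) \<le> K * real B" .
    have "real (card (subst_pow \<theta> m v)) = exp (ln (real (card (subst_pow \<theta> m v))))"
      using card_pow_pos[of m v] by simp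
    also have "\<dots> \<le> exp (K * real B)" using le by simp
    finally show ?thesis .
  qed
  have "card (language_len \<theta> l) \<le> card (\<Union>v\<in>V. \<Union>y\<in>subst_pow \<theta> m v. S y)"
    by (rule card_mono[OF _ cover]) (use finV fin finS in auto)
  also have "\<dots> \<le> (\<Sum>v\<in>V. card (\<Union>y\<in>subst_pow \<theta> m v. S y))" by (rule card_UN_le[OF finV])
  also have "\<dots> \<le> (\<Sum>v\<in>V. \<Sum>y\<in>subst_pow \<theta> m v. card (S y))" by (intro sum_mono card_UN_le fin)
  also have "\<dots> \<le> (\<Sum>v\<in>V. card (subst_pow \<theta> m v) * B)"
  proof (rule sum_mono)
    fix v assume v: "v \<in> V"
    have "(\<Sum>y\<in>subst_pow \<theta> m v. card (S y)) \<le> of_nat (card (subst_pow \<theta> m v)) * B"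
      by (rule sum_bounded_above) (rule cS[OF v])
    then show "(\<Sum>y\<in>subst_pow \<theta> m v. card (S y)) \<le> card (subst_pow \<theta> m v) * B" by simp
  qed
  finally have cL0: "card (language_len \<theta> l) \<le> (\<Sum>v\<in>V. card (subst_pow \<theta> m v) * B)" .
  have cL: "real (card (language_len \<theta> l)) \<le> (\<Sum>v\<in>V. real (card (subst_pow \<theta> m v)) * real B)"
  proof -
    have "real (card (language_len \<theta> l)) \<le> real (\<Sum>v\<in>V. card (subst_pow \<theta> m v) * B)"
      using cL0 by (simp only: of_nat_le_iff)
    then show ?thesis by (simp add: of_nat_sum)
  qed
  also have "\<dots> \<le> (\<Sum>v\<in>V. exp (K * real B) * real B)" by (intro sum_mono mult_right_mono cP) auto
  also have "\<dots> = real (card V) * (exp (K * real B) * real B)" by simp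
  also have "\<dots> \<le> real ((D + 1) * n ^ D) * (exp (K * real B) * real B)"
  proof (rule mult_right_mono)
    show "real (card V) \<le> real ((D + 1) * n ^ D)" using cardV by (simp only: of_nat_le_iff)
  qed simp
  also have "real ((D + 1) * n ^ D) * (exp (K * real B) * real B) = real (D + 1) * real n ^ D * exp (K * real B) * real B"
    by (simp only: of_nat_mult of_nat_power mult.assoc)
  finally have cL2: "real (card (language_len \<theta> l)) \<le> real (D + 1) * real n ^ D * exp (K * real B) * real B" .
  have DB: "real D \<le> real B / real (Lmin m)"
  proof -
    have "D * Lmin m \<le> B" unfolding D_def by (rule div_times_less_eq_dividend)
    then have "real D * real (Lmin m) \<le> real B" by (metis of_nat_le_iff of_nat_mult)
    then show ?thesis using Lmin_pos by (simp add: field_simps)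
  qed
  have DB': "D \<le> B" unfolding D_def by simp
  have lnn: "ln (real n) \<ge> 0" using n1 by simp
  have RHS: "ln (real (D + 1) * real n ^ D * exp (K * real B) * real B)
      = ln (real (D + 1)) + real D * ln (real n) + K * real B + ln (real B)"
    using n1 B1 by (simp add: ln_mult ln_realpow)
  have "ln (real (D + 1)) \<le> ln (real B + 1)" using DB' by simp
  moreover have "ln (real B) \<le> ln (real B + 1)" using B1 by simp
  moreover have "real D * ln (real n) \<le> real B / real (Lmin m) * ln (real n)"
    using DB lnn by (rule mult_right_mono)
  ultimately have bound: "ln (real (D + 1) * real n ^ D * exp (K * real B) * real B)
      \<le> 2 * ln (real B + 1) + real B / real (Lmin m) * ln (real n) + K * real B"
    unfolding RHS by linarith
  show ?thesis
  proof (cases "card (language_len \<theta> l) = 0")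
    case True
    have "0 \<le> 2 * ln (real B + 1) + real B / real (Lmin m) * ln (real n) + K * real B"
      using lnn K by (intro add_nonneg_nonneg mult_nonneg_nonneg) auto
    then show ?thesis using True unfolding B_def n_def by simp
  next
    case False
    then have "ln (real (card (language_len \<theta> l))) \<le> ln (real (D + 1) * real n ^ D * exp (K * real B) * real B)"
      using cL2 by simp
    then show ?thesis using bound unfolding B_def n_def by simp
  qed
qed

end


lemma inv_lin_0: "(\<lambda>l. C / real l) \<longlonglongrightarrow> 0"
  by (rule tendsto_divide_0[OF tendsto_const filterlim_at_top_imp_at_infinity[OF filterlim_real_sequentially]])

lemma ln_lin_over: "(\<lambda>l. ln (real l + C) / real l) \<longlonglongrightarrow> 0"
proof -
  have top: "LIM l sequentially. C + real l :> at_top"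
    by (rule filterlim_tendsto_add_at_top[OF tendsto_const filterlim_real_sequentially])
  have A: "(\<lambda>l. ln (C + real l) / (C + real l)) \<longlonglongrightarrow> 0"
    using filterlim_compose[OF ln_x_over_x_tendsto_0 top] by simp
  have B: "(\<lambda>l. 1 + C / real l) \<longlonglongrightarrow> 1 + 0" by (intro tendsto_intros inv_lin_0)
  have "(\<lambda>l. ln (C + real l) / (C + real l) * (1 + C / real l)) \<longlonglongrightarrow> 0 * (1 + 0)"
    by (intro tendsto_mult A B)
  moreover have "\<forall>\<^sub>F l in sequentially. ln (C + real l) / (C + real l) * (1 + C / real l) = ln (real l + C) / real l"
  proof -
    have "\<forall>\<^sub>F l in sequentially. C + real l > 0 \<and> l > 0"
      using top eventually_gt_at_top[of 0] unfolding filterlim_at_top_dense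
      by (metis (mono_tags) eventually_conj eventually_gt_at_top)
    then show ?thesis
    proof eventually_elim
      case (elim l)
      have "ln (C + real l) / (C + real l) * (1 + C / real l) = ln (C + real l) / (C + real l) * ((C + real l) / real l)"
        using elim by (simp add: field_simps)
      also have "\<dots> = ln (C + real l) / real l" using elim by simp
      finally show ?case by (simp add: add.commute)
    qed
  qed
  ultimately show ?thesis by (auto intro: Lim_transform_eventually)
qed

context RS begin

lemma ev_bounds:
  assumes lam1: "lam > 1" and T: "T \<ge> 0"
    and rat: "\<And>b. (\<lambda>m. ln (real (Nm m b)) / real (lenw m b)) \<longlonglongrightarrow> T"
    and \<epsilon>: "\<epsilon> > 0"
  shows "\<forall>\<^sub>F l in sequentially. T - 2 * \<epsilon> < ln (real (card (language_len \<theta> l))) / real l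
     \<and> ln (real (card (language_len \<theta> l))) / real l < T + 3 * \<epsilon>"
proof -
  define lnn where "lnn = ln (real (card (UNIV::'a set)))"
  have lnn0: "lnn \<ge> 0" unfolding lnn_def by (simp add: Suc_le_eq finite_UNIV_card_ge_0)
  have "\<forall>\<^sub>F m in sequentially. \<forall>b. \<bar>ln (real (Nm m b)) / real (lenw m b) - T\<bar> < \<epsilon> \<and> real (lenw m b) \<ge> lnn / \<epsilon>"
  proof (rule eventually_all_finite)
    fix b
    have e1: "\<forall>\<^sub>F m in sequentially. \<bar>ln (real (Nm m b)) / real (lenw m b) - T\<bar> < \<epsilon>"
      using rat[of b] \<epsilon> unfolding tendsto_iff dist_real_def by blast
    have e2: "\<forall>\<^sub>F m in sequentially. real (lenw m b) \<ge> lnn / \<epsilon>"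
      using lenw_inf[OF lam1, of b] unfolding filterlim_at_top by blast
    show "\<forall>\<^sub>F m in sequentially. \<bar>ln (real (Nm m b)) / real (lenw m b) - T\<bar> < \<epsilon> \<and> real (lenw m b) \<ge> lnn / \<epsilon>"
      using e1 e2 by (rule eventually_conj)
  qed
  then obtain m where m: "\<And>b. \<bar>ln (real (Nm m b)) / real (lenw m b) - T\<bar> < \<epsilon>" "\<And>b. real (lenw m b) \<ge> lnn / \<epsilon>"
    unfolding eventually_sequentially by blast
  have lpos: "real (lenw m c) > 0" for c using lenw_ge1[of m c] by simp
  have ub: "ln (real (Nm m c)) \<le> (T + \<epsilon>) * real (lenw m c)" for c
  proof -
    have "ln (real (Nm m c)) / real (lenw m c) < T + \<epsilon>" using m(1)[of c] by linarith
    then show ?thesis using lpos[of c] by (simp add: pos_divide_less_eq less_imp_le)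
  qed
  have lb: "(T - \<epsilon>) * real (lenw m c) \<le> ln (real (Nm m c))" for c
  proof -
    have "T - \<epsilon> < ln (real (Nm m c)) / real (lenw m c)" using m(1)[of c] by linarith
    then show ?thesis using lpos[of c] by (simp add: pos_less_divide_eq less_imp_le)
  qed
  define Lm where "Lm = real (Lmin m)"
  define Lx where "Lx = real (Lmax m)"
  have Lm_pos: "Lm > 0" unfolding Lm_def using Lmin_ge1[of m] by simp
  have "Lmin m \<in> range (lenw m)" unfolding Lmin_def by (intro Min_in) auto
  then have "Lm \<ge> lnn / \<epsilon>" unfolding Lm_def using m(2) by auto
  then have lnLm: "lnn / Lm \<le> \<epsilon>" using Lm_pos \<epsilon> by (simp add: field_simps)
  define a where "a = real (2 * Lmax m)"
  define U where "U l = 2 * ln (real l + a + 1) + (real l + a) / Lm * lnn + (T + \<epsilon>) * (real l + a)" for l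
  define Lo where "Lo l = (T - \<epsilon>) * real l - \<bar>T - \<epsilon>\<bar> * Lx" for l
  define x where "x l = ln (real (card (language_len \<theta> l))) / real l" for l
  have xU: "x l \<le> U l / real l" if "l \<ge> 1" for l
  proof -
    have "ln (real (card (language_len \<theta> l))) \<le> U l"
      using upper[OF ub _ that, of ] T \<epsilon> unfolding U_def a_def Lm_def lnn_def by (simp add: add.assoc)
    then show ?thesis unfolding x_def using that by (simp add: divide_right_mono)
  qed
  have xL: "Lo l / real l \<le> x l" if "l \<ge> 1" for l
  proof -
    have "Lo l \<le> ln (real (card (language_len \<theta> l)))"
      using lower[OF lb lam1, of l] unfolding Lo_def Lx_def by simp
    then show ?thesis unfolding x_def using that by (simp add: divide_right_mono)
  qed
  have Ulim: "(\<lambda>l. U l / real l) \<longlonglongrightarrow> 2 * 0 + (1 + 0) * (lnn / Lm) + (T + \<epsilon>) * (1 + 0)"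
  proof -
    have "(\<lambda>l. 2 * (ln (real l + (a + 1)) / real l) + (1 + a / real l) * (lnn / Lm) + (T + \<epsilon>) * (1 + a / real l))
        \<longlonglongrightarrow> 2 * 0 + (1 + 0) * (lnn / Lm) + (T + \<epsilon>) * (1 + 0)"
      by (intro tendsto_intros ln_lin_over inv_lin_0)
    moreover have "\<forall>\<^sub>F l in sequentially. 2 * (ln (real l + (a + 1)) / real l) + (1 + a / real l) * (lnn / Lm) + (T + \<epsilon>) * (1 + a / real l) = U l / real l"
      using eventually_gt_at_top[of "0::nat"]
      by eventually_elim (use Lm_pos in \<open>simp add: U_def field_simps add.assoc\<close>)
    ultimately show ?thesis by (rule Lim_transform_eventually)
  qed
  have Llim: "(\<lambda>l. Lo l / real l) \<longlonglongrightarrow> (T - \<epsilon>) - 0"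
  proof -
    have "(\<lambda>l. (T - \<epsilon>) - \<bar>T - \<epsilon>\<bar> * Lx / real l) \<longlonglongrightarrow> (T - \<epsilon>) - 0"
      by (intro tendsto_intros inv_lin_0)
    moreover have "\<forall>\<^sub>F l in sequentially. (T - \<epsilon>) - \<bar>T - \<epsilon>\<bar> * Lx / real l = Lo l / real l"
      using eventually_gt_at_top[of "0::nat"]
      by eventually_elim (simp add: Lo_def field_simps)
    ultimately show ?thesis by (rule Lim_transform_eventually)
  qed
  have "lnn / Lm + (T + \<epsilon>) < T + 3 * \<epsilon>" using lnLm \<epsilon> by simp
  then have evU: "\<forall>\<^sub>F l in sequentially. U l / real l < T + 3 * \<epsilon>"
    using order_tendstoD(2)[OF Ulim] by simp
  have evL: "\<forall>\<^sub>F l in sequentially. T - 2 * \<epsilon> < Lo l / real l"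
    using order_tendstoD(1)[OF Llim] \<epsilon> by simp
  have "\<forall>\<^sub>F l in sequentially. T - 2 * \<epsilon> < x l \<and> x l < T + 3 * \<epsilon>"
    using evU evL eventually_ge_at_top[of "1::nat"]
  proof eventually_elim
    case (elim l)
    then show ?case using xU[of l] xL[of l] by linarith
  qed
  then show ?thesis unfolding x_def .
qed

lemma entropy_limit:
  assumes lam1: "lam > 1" and T: "T \<ge> 0"
    and rat: "\<And>b. (\<lambda>m. ln (real (Nm m b)) / real (lenw m b)) \<longlonglongrightarrow> T"
  shows "(\<lambda>l. ln (real (card (language_len \<theta> l))) / real l) \<longlonglongrightarrow> T"
proof (rule order_tendstoI)
  fix a assume "a < T"
  then have e: "(T - a) / 2 > 0" by simp
  have h: "T - 2 * ((T - a) / 2) = a" by (simp add: field_simps)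
  show "\<forall>\<^sub>F l in sequentially. a < ln (real (card (language_len \<theta> l))) / real l"
    using ev_bounds[OF lam1 T rat e] unfolding h by (rule eventually_mono) simp
next
  fix a assume "T < a"
  then have e: "(a - T) / 3 > 0" by simp
  have h: "T + 3 * ((a - T) / 3) = a" by (simp add: field_simps)
  show "\<forall>\<^sub>F l in sequentially. ln (real (card (language_len \<theta> l))) / real l < a"
    using ev_bounds[OF lam1 T rat e] unfolding h by (rule eventually_mono) simp
qed

end


context RS begin

lemma P1: "P 1 = M" using mat_mult_id(1)[of M] by simp

lemma lam_eq1:
  assumes "lam = 1"
  shows "(\<forall>a. q1 \<theta> a = 0) \<and> (\<forall>l\<ge>2. language_len \<theta> l = {})"
proof -
  have eq: "lam = (\<Sum>j\<in>UNIV. (\<Sum>i\<in>UNIV. M i j) * R j)"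
  proof -
    have "lam = (\<Sum>i\<in>UNIV. lam * R i)" using Rsum by (simp add: sum_distrib_left[symmetric])
    also have "\<dots> = (\<Sum>i\<in>UNIV. \<Sum>j\<in>UNIV. M i j * R j)" using eig by (simp add: mvec_def)
    also have "\<dots> = (\<Sum>j\<in>UNIV. (\<Sum>i\<in>UNIV. M i j) * R j)"
      by (subst sum.swap) (simp add: sum_distrib_right)
    finally show ?thesis .
  qed
  have "(\<Sum>j\<in>UNIV. ((\<Sum>i\<in>UNIV. M i j) - 1) * R j) = 0"
    using eq assms Rsum by (simp add: algebra_simps sum_subtractf)
  moreover have "\<forall>j\<in>UNIV. ((\<Sum>i\<in>UNIV. M i j) - 1) * R j \<ge> 0"
  proof
    fix j :: 'a
    have "(\<Sum>i\<in>UNIV. M i j) - 1 \<ge> 0" using Msum_ge[of j] by simp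
    then show "((\<Sum>i\<in>UNIV. M i j) - 1) * R j \<ge> 0" using Rpos[of j] by simp
  qed
  ultimately have "\<forall>j\<in>UNIV. ((\<Sum>i\<in>UNIV. M i j) - 1) * R j = 0"
    using sum_nonneg_eq_0_iff[of "UNIV::'a set" "\<lambda>j. ((\<Sum>i\<in>UNIV. M i j) - 1) * R j"] by simp
  then have z: "((\<Sum>i\<in>UNIV. M i j) - 1) * R j = 0" for j by blast
  have cs: "(\<Sum>i\<in>UNIV. M i j) = 1" for j
  proof -
    have "R j \<noteq> 0" using Rpos[of j] by simp
    then show ?thesis using z[of j] by simp
  qed
  have len1: "real (lenw m b) = 1" for m b
  proof (induction m arbitrary: b)
    case 0 then show ?case unfolding lenw_real by simp
  next
    case (Suc m)
    have "real (lenw (Suc m) b) = (\<Sum>d\<in>UNIV. \<Sum>k\<in>UNIV. P m d k * M k b)"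
      unfolding lenw_real by (simp add: mat_mult_def)
    also have "\<dots> = (\<Sum>k\<in>UNIV. (\<Sum>d\<in>UNIV. P m d k) * M k b)"
      by (subst sum.swap) (simp add: sum_distrib_right)
    also have "\<dots> = (\<Sum>k\<in>UNIV. M k b)" using Suc by (simp add: lenw_real[symmetric])
    finally show ?case using cs by simp
  qed
  then have len1': "lenw m b = 1" for m b by (metis of_nat_eq_1_iff)
  obtain p where p: "p > 0" "\<And>i j. P p i j > 0" using prim_pos by blast
  fix b0 :: 'a
  define y0 where "y0 = (SOME x. x \<in> subst_pow \<theta> p [b0])"
  have y0: "y0 \<in> subst_pow \<theta> p [b0]" unfolding y0_def by (rule some_in)
  have ly0: "length y0 = 1" using len_pow[OF y0] len1' by simp
  have alld: "d \<in> set y0" for d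
  proof -
    have "real (count_list y0 d) > 0" using count_single[OF y0, of d] p(2) by simp
    then show ?thesis by (metis count_list_0_iff less_irrefl of_nat_0)
  qed
  have single: "d = e" for d e :: 'a
    using alld[of d] alld[of e] ly0 by (cases y0) auto
  have q: "q1 \<theta> a = 0" for a
  proof -
    obtain u0 where u0: "u0 \<in> \<theta> a" using rs unfolding is_random_subst_def by blast
    have "u = u0" if "u \<in> \<theta> a" for u
    proof -
      have "length u = 1" "length u0 = 1" using len_pow[of u 1 a] len_pow[of u0 1 a] that u0 len1' by auto
      then show ?thesis using single by (cases u; cases u0) auto
    qed
    then have "\<theta> a = {u0}" using u0 by blast
    then show ?thesis unfolding q1_def by simp
  qed
  have "language_len \<theta> l = {}" if "l \<ge> 2" for l
  proof (rule ccontr)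
    assume "language_len \<theta> l \<noteq> {}"
    then obtain w where "w \<in> language \<theta>" "length w = l" unfolding language_len_def by auto
    then obtain a m u where "u \<in> subst_pow \<theta> m [a]" "sublist w u" unfolding language_def by blast
    then have "length w \<le> 1" using len_pow len1' sublist_length_le by metis
    then show False using that \<open>length w = l\<close> by simp
  qed
  then show ?thesis using q by blast
qed

end

theorem mainTheorem9:
  fixes \<theta> :: "'a::finite \<Rightarrow> 'a list set" and lam :: real and R :: "'a \<Rightarrow> real"
  assumes "is_random_subst \<theta>"
    and "semi_compatible \<theta>"
    and "primitive_matrix (subst_matrix \<theta>)"
    and "is_PF_eigenvalue (subst_matrix \<theta>) lam"
    and "is_PF_right_eigenvector (subst_matrix \<theta>) lam R"
  shows "(identical_set_condition \<theta> \<longrightarrow>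
           (\<lambda>l. ln (real (card (language_len \<theta> l))) / real l)
             \<longlonglongrightarrow> (1 / lam) * (\<Sum>a\<in>UNIV. q1 \<theta> a * R a)) \<and>
         (disjoint_set_condition \<theta> \<longrightarrow>
           (\<lambda>l. ln (real (card (language_len \<theta> l))) / real l)
             \<longlonglongrightarrow> (1 / (lam - 1)) * (\<Sum>a\<in>UNIV. q1 \<theta> a * R a))"
proof -
  interpret RS \<theta> lam R using assms by unfold_locales
  have Qeq: "(\<Sum>a\<in>UNIV. q1 \<theta> a * R a) = Q" unfolding Q_def ..
  show ?thesis
  proof (cases "lam = 1")
    case True
    from lam_eq1[OF True] have q0: "\<And>a. q1 \<theta> a = 0" and emp: "\<And>l. l \<ge> 2 \<Longrightarrow> language_len \<theta> l = {}"
      by auto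
    have lim0: "(\<lambda>l. ln (real (card (language_len \<theta> l))) / real l) \<longlonglongrightarrow> 0"
    proof (rule Lim_transform_eventually[OF tendsto_const])
      show "\<forall>\<^sub>F l in sequentially. 0 = ln (real (card (language_len \<theta> l))) / real l"
        using eventually_ge_at_top[of "2::nat"] by eventually_elim (simp add: emp)
    qed
    then show ?thesis using q0 by simp
  next
    case False
    then have lam1: "lam > 1" using lam_ge1 by simp
    have T1: "Q / lam \<ge> 0" using Q_nonneg lam_pos by simp
    have T2: "Q / (lam - 1) \<ge> 0" using Q_nonneg lam1 by simp
    have "identical_set_condition \<theta> \<Longrightarrow> (\<lambda>l. ln (real (card (language_len \<theta> l))) / real l) \<longlonglongrightarrow> Q / lam"
      by (rule entropy_limit[OF lam1 T1 ratio_isc])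
    moreover have "disjoint_set_condition \<theta> \<Longrightarrow> (\<lambda>l. ln (real (card (language_len \<theta> l))) / real l) \<longlonglongrightarrow> Q / (lam - 1)"
      by (rule entropy_limit[OF lam1 T2 ratio_dsc]) (use lam1 in auto)
    ultimately show ?thesis unfolding Qeq by simp
  qed
qed


end
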